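(* Let $K=K_*\ge 2$ be the true (known) number of communities, $Z_*\in\mathcal M_{n,K}$ the true clustering matrix, and suppose Assumption A1 holds. Let $\hat Z$ be a solution (for this fixed $K$) of $$\min_{Z\in\mathcal M_{n,K},\,J}\Big\{\sum_{k,l=1}^K\big\|A^{(k,l)}(Z,K)-\Pi_{(1)}\big(\Pi_{J^{(k,l)}}(A^{(k,l)}(Z,K))\big)\big\|_F^2+\mathrm{Pen}(n,J,K)\Big\},$$ where $J$ ranges over sparsity families for $(Z,K)$ and $\mathrm{Pen}$ is one of the penalties $\mathrm{Pen}^{(s)}$, $\mathrm{Pen}^{(ns)}$ (with fixed constants $\beta_1,\beta_2>0$). There are absolute positive constants $H_1,H_2$, independent of $K,n,t,J_*,\breve J_*(Z),\delta_n,\alpha_n$, such that: if for some $\alpha_n\in(0,1/2)$, $\delta_n\in(0,1)$ and $t>0$, $$\|P_*\|_F^2\ge\max_{Z\in\Upsilon(Z_*,\delta_n)}\Big[(1+\alpha_n)\sum_{k,l=1}^K\|P_*^{(k,l)}(Z)\|_{op}^2+\frac{H_1}{\alpha_n}|\breve J_*(Z)|\ln\Big(\frac{nKe}{|\breve J_*(Z)|}\Big)\Big]+\frac{H_1}{\alpha_n}\big(|J_*|+n\ln K+t\big)+H_2|J_*|\ln\Big(\frac{nKe}{|J_*|}\Big),$$ then, with probability at least $1-2e^{-t}$, the proportion of nodes misclassified by $\hat Z$, namely $(2n)^{-1}\min_{\mathscr P_K\in\mathcal P_K}\|\hat Z\mathscr P_K-Z_*\|_1$, is at most $\delta_n$.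
   Context: Network model: $A\in\{0,1\}^{n\times n}$ symmetric, $A_{ij}\sim\mathrm{Bernoulli}((P_* )_{ij})$ independent for $1\le i\le j\le n$, $A_{ji}=A_{ij}$, $P_*$ symmetric. $\mathcal M_{n,K}$: matrices $Z\in\{0,1\}^{n\times K}$ with one $1$ per row, $Z_{ik}=1$ iff node $i\in\mathcal N_k$, $Z^TZ=\mathrm{diag}(n_1,\dots,n_K)$, $n_k=|\mathcal N_k|$. $\mathscr P_{Z,K}$ is the permutation matrix reordering nodes by community; $B(Z,K)=\mathscr P_{Z,K}^TB\mathscr P_{Z,K}$ and $B^{(k,l)}(Z)=B^{(k,l)}(Z,K)\in\mathbb R^{n_k\times n_l}$ is its $(k,l)$ block (rows: nodes of $\mathcal N_k$, columns: nodes of $\mathcal N_l$). True model: $P_*^{(k,l)}(Z_* )=\Lambda_*^{(k,l)}(\Lambda_*^{(l,k)})^T$ where $\Lambda_*\in[0,1]^{n\times K}$ has column $l$ split into blocks $\Lambda_*^{(k,l)}\in[0,1]^{n_k}$ indexed by the nodes of community $k$ of $Z_*$. Assumption A1: for every $k$, the vectors $\Lambda_*^{(k,1)},\dots,\Lambda_*^{(k,K)}$ are linearly independent. $(J_* )_{k,l}=\{i:(\Lambda_*^{(k,l)})_i\ne0\}$, $|J_*|=\sum_{k,l}|(J_* )_{k,l}|$ (number of nonzero entries of $\Lambda_*$). For $Z\in\mathcal M_{n,K}$: $(\breve J_* )_{k,l}(Z)=\{i\in\mathcal N_k: (P_*^{(k,l)}(Z))_{ij}\neq0 \text{ for some } j\}$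 and $|\breve J_*(Z)|=\sum_{k,l}|(\breve J_* )_{k,l}(Z)|$. A sparsity family for $(Z,K)$ is $J=(J_{k,l})$ with $J_{k,l}\subseteq\mathcal N_k$, $J^{(k,l)}=J_{k,l}\times J_{l,k}$, $|J|=\sum|J_{k,l}|$; $\Pi_{J^{(k,l)}}(X)$ sets entries of $X$ outside $J^{(k,l)}$ to zero; $\Pi_{(1)}(X)$ is the best rank-one approximation of $X$. Penalties (convention $0\ln(c/0)=0$): $\mathrm{Pen}^{(s)}=\beta_1\sum_{k,l}|J_{k,l}|\ln(n_ke/|J_{k,l}|)+\beta_2K\sum_k\ln n_k+\beta_2(n\ln K+\ln n)$; $\mathrm{Pen}^{(ns)}=\beta_1|J|\ln(nKe/|J|)+2\beta_2\ln n+\beta_2(n\ln K+\ln n)$. $\mathcal P_K$ is the set of $K\times K$ permutation matrices, and $\Upsilon(Z_*,\delta_n)=\{Z\in\mathcal M_{n,K}:(2n)^{-1}\min_{\mathscr P_K\in\mathcal P_K}\|Z\mathscr P_K-Z_*\|_1\ge\delta_n\}$; $\|\cdot\|_1$ is the entrywise $\ell_1$ norm. *)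

theory Defs
  imports "HOL-Probability.Probability" "HOL-Combinatorics.Permutations"
begin

text \<open>Nodes are 0..n-1, communities 0..K-1. A clustering matrix Z in M_{n,K} is encoded
 by its label function z (z i = k iff Z_{ik} = 1).\<close>

definition comm :: "nat \<Rightarrow> (nat \<Rightarrow> nat) \<Rightarrow> nat \<Rightarrow> nat set" where
  "comm n z k = {i \<in> {..<n}. z i = k}"

definition labelings :: "nat \<Rightarrow> nat \<Rightarrow> (nat \<Rightarrow> nat) set" where
  "labelings n K = {z \<in> {..<n} \<rightarrow>\<^sub>E {..<K}. \<forall>k<K. comm n z k \<noteq> {}}"

definition zmat :: "(nat \<Rightarrow> nat) \<Rightarrow> nat \<Rightarrow> nat \<Rightarrow> real" where
  "zmat z i k = (if z i = k then 1 else 0)"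

definition permmat :: "(nat \<Rightarrow> nat) \<Rightarrow> nat \<Rightarrow> nat \<Rightarrow> real" where
  "permmat \<sigma> k l = (if \<sigma> k = l then 1 else 0)"

definition misclass :: "nat \<Rightarrow> nat \<Rightarrow> (nat \<Rightarrow> nat) \<Rightarrow> (nat \<Rightarrow> nat) \<Rightarrow> real" where
  "misclass n K z zs =
     Min ((\<lambda>\<sigma>. \<Sum>i<n. \<Sum>l<K. \<bar>(\<Sum>k<K. zmat z i k * permmat \<sigma> k l) - zmat zs i l\<bar>)
           ` {\<sigma>. \<sigma> permutes {..<K}}) / (2 * real n)"

definition is_sparsity_family :: "nat \<Rightarrow> nat \<Rightarrow> (nat \<Rightarrow> nat) \<Rightarrow> (nat \<Rightarrow> nat \<Rightarrow> nat set) \<Rightarrow> bool" where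
  "is_sparsity_family n K z J \<longleftrightarrow> (\<forall>k<K. \<forall>l<K. J k l \<subseteq> comm n z k)"

definition card_fam :: "nat \<Rightarrow> (nat \<Rightarrow> nat \<Rightarrow> nat set) \<Rightarrow> nat" where
  "card_fam K J = (\<Sum>k<K. \<Sum>l<K. card (J k l))"

definition frob2 :: "nat set \<Rightarrow> nat set \<Rightarrow> (nat \<Rightarrow> nat \<Rightarrow> real) \<Rightarrow> real" where
  "frob2 I J M = (\<Sum>i\<in>I. \<Sum>j\<in>J. (M i j)\<^sup>2)"

definition opnorm :: "nat set \<Rightarrow> nat set \<Rightarrow> (nat \<Rightarrow> nat \<Rightarrow> real) \<Rightarrow> real" where
  "opnorm I J M = Sup {sqrt (\<Sum>i\<in>I. (\<Sum>j\<in>J. M i j * v j)\<^sup>2) | v. (\<Sum>j\<in>J. (v j)\<^sup>2) \<le> 1}"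

definition rank_le1 :: "(nat \<Rightarrow> nat \<Rightarrow> real) set" where
  "rank_le1 = {R. \<exists>u v. \<forall>i j. R i j = u i * v j}"

definition best_rank1 :: "nat set \<Rightarrow> nat set \<Rightarrow> (nat \<Rightarrow> nat \<Rightarrow> real) \<Rightarrow> (nat \<Rightarrow> nat \<Rightarrow> real)" where
  "best_rank1 I J Y = (SOME R. R \<in> rank_le1 \<and>
     (\<forall>R' \<in> rank_le1. frob2 I J (\<lambda>i j. Y i j - R i j) \<le> frob2 I J (\<lambda>i j. Y i j - R' i j)))"

definition sparse_proj :: "(nat \<Rightarrow> nat \<Rightarrow> nat set) \<Rightarrow> nat \<Rightarrow> nat \<Rightarrow> (nat \<Rightarrow> nat \<Rightarrow> real) \<Rightarrow> (nat \<Rightarrow> nat \<Rightarrow> real)" where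
  "sparse_proj J k l A = (\<lambda>i j. if i \<in> J k l \<and> j \<in> J l k then A i j else 0)"

definition pen_s :: "real \<Rightarrow> real \<Rightarrow> nat \<Rightarrow> nat \<Rightarrow> (nat \<Rightarrow> nat) \<Rightarrow> (nat \<Rightarrow> nat \<Rightarrow> nat set) \<Rightarrow> real" where
  "pen_s \<beta>1 \<beta>2 n K z J =
     \<beta>1 * (\<Sum>k<K. \<Sum>l<K. real (card (J k l)) *
             ln (real (card (comm n z k)) * exp 1 / real (card (J k l))))
     + \<beta>2 * real K * (\<Sum>k<K. ln (real (card (comm n z k))))
     + \<beta>2 * (real n * ln (real K) + ln (real n))"

definition pen_ns :: "real \<Rightarrow> real \<Rightarrow> nat \<Rightarrow> nat \<Rightarrow> (nat \<Rightarrow> nat \<Rightarrow> nat set) \<Rightarrow> real" where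
  "pen_ns \<beta>1 \<beta>2 n K J =
     \<beta>1 * real (card_fam K J) * ln (real n * real K * exp 1 / real (card_fam K J))
     + 2 * \<beta>2 * ln (real n)
     + \<beta>2 * (real n * ln (real K) + ln (real n))"

definition crit :: "real \<Rightarrow> real \<Rightarrow> bool \<Rightarrow> nat \<Rightarrow> nat \<Rightarrow> (nat \<Rightarrow> nat \<Rightarrow> real)
                    \<Rightarrow> (nat \<Rightarrow> nat) \<Rightarrow> (nat \<Rightarrow> nat \<Rightarrow> nat set) \<Rightarrow> real" where
  "crit \<beta>1 \<beta>2 sp n K A z J =
     (\<Sum>k<K. \<Sum>l<K. frob2 (comm n z k) (comm n z l)
        (\<lambda>i j. A i j - best_rank1 (comm n z k) (comm n z l) (sparse_proj J k l A) i j))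
     + (if sp then pen_s \<beta>1 \<beta>2 n K z J else pen_ns \<beta>1 \<beta>2 n K J)"

definition is_estimate :: "real \<Rightarrow> real \<Rightarrow> bool \<Rightarrow> nat \<Rightarrow> nat \<Rightarrow> (nat \<Rightarrow> nat \<Rightarrow> real) \<Rightarrow> (nat \<Rightarrow> nat) \<Rightarrow> bool" where
  "is_estimate \<beta>1 \<beta>2 sp n K A z \<longleftrightarrow> z \<in> labelings n K \<and>
     (\<exists>J. is_sparsity_family n K z J \<and>
        (\<forall>z' \<in> labelings n K. \<forall>J'. is_sparsity_family n K z' J' \<longrightarrow>
            crit \<beta>1 \<beta>2 sp n K A z J \<le> crit \<beta>1 \<beta>2 sp n K A z' J'))"

definition breve_card :: "nat \<Rightarrow> nat \<Rightarrow> (nat \<Rightarrow> nat \<Rightarrow> real) \<Rightarrow> (nat \<Rightarrow> nat) \<Rightarrow> nat" where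
  "breve_card n K P z = (\<Sum>k<K. \<Sum>l<K. card {i \<in> comm n z k. \<exists>j \<in> comm n z l. P i j \<noteq> 0})"

definition Jstar_card :: "nat \<Rightarrow> nat \<Rightarrow> (nat \<Rightarrow> nat) \<Rightarrow> (nat \<Rightarrow> nat \<Rightarrow> real) \<Rightarrow> nat" where
  "Jstar_card n K zs \<Lambda> = (\<Sum>k<K. \<Sum>l<K. card {i \<in> comm n zs k. \<Lambda> i l \<noteq> 0})"

definition edge_pmf :: "nat \<Rightarrow> (nat \<Rightarrow> nat \<Rightarrow> real) \<Rightarrow> (nat \<times> nat \<Rightarrow> bool) pmf" where
  "edge_pmf n P = Pi_pmf {(i, j). i \<le> j \<and> j < n} False (\<lambda>(i, j). bernoulli_pmf (P i j))"

definition adj :: "nat \<Rightarrow> (nat \<times> nat \<Rightarrow> bool) \<Rightarrow> nat \<Rightarrow> nat \<Rightarrow> real" where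
  "adj n \<omega> = (\<lambda>i j. if i < n \<and> j < n \<and> \<omega> (min i j, max i j) then 1 else 0)"

end

theory Submission
  imports Defs
begin

definition nrm2 :: "'a set \<Rightarrow> ('a \<Rightarrow> real) \<Rightarrow> real" where
  "nrm2 S u = (\<Sum>i\<in>S. (u i)\<^sup>2)"

definition mv :: "nat set \<Rightarrow> (nat \<Rightarrow> nat \<Rightarrow> real) \<Rightarrow> (nat \<Rightarrow> real) \<Rightarrow> nat \<Rightarrow> real" where
  "mv J M v = (\<lambda>i. \<Sum>j\<in>J. M i j * v j)"

lemma nrm2_nonneg[simp]: "0 \<le> nrm2 S u"
  unfolding nrm2_def by (auto intro: sum_nonneg)

lemma nrm2_scale: "nrm2 S (\<lambda>i. c * u i) = c\<^sup>2 * nrm2 S u"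
  unfolding nrm2_def by (simp add: sum_distrib_left power_mult_distrib)

lemma mv_scale: "mv J M (\<lambda>j. c * v j) i = c * mv J M v i"
  unfolding mv_def by (simp add: sum_distrib_left algebra_simps)

lemma nrm2_zero_iff: "finite S \<Longrightarrow> nrm2 S u = 0 \<longleftrightarrow> (\<forall>i\<in>S. u i = 0)"
  unfolding nrm2_def by (simp add: sum_nonneg_eq_0_iff)

lemma CS_abs: "\<bar>\<Sum>i\<in>I. a i * b i\<bar> \<le> sqrt (nrm2 I a) * sqrt (nrm2 I b)"
proof -
  have "(\<Sum>i\<in>I. a i * b i)\<^sup>2 \<le> nrm2 I a * nrm2 I b"
    unfolding nrm2_def by (rule Cauchy_Schwarz_ineq_sum)
  hence "sqrt ((\<Sum>i\<in>I. a i * b i)\<^sup>2) \<le> sqrt (nrm2 I a * nrm2 I b)"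
    by (rule real_sqrt_le_mono)
  hence "\<bar>\<Sum>i\<in>I. a i * b i\<bar> \<le> sqrt (nrm2 I a * nrm2 I b)" by simp
  thus ?thesis by (simp add: real_sqrt_mult)
qed

lemma CS: "(\<Sum>i\<in>I. a i * b i) \<le> sqrt (nrm2 I a) * sqrt (nrm2 I b)"
  using CS_abs[of a b I] by linarith

lemma mv_bound: "nrm2 I (mv J M v) \<le> frob2 I J M * nrm2 J v"
proof -
  have "nrm2 I (mv J M v) = (\<Sum>i\<in>I. (\<Sum>j\<in>J. M i j * v j)\<^sup>2)"
    by (simp add: nrm2_def mv_def)
  also have "\<dots> \<le> (\<Sum>i\<in>I. (\<Sum>j\<in>J. (M i j)\<^sup>2) * nrm2 J v)"
    by (intro sum_mono) (simp add: nrm2_def Cauchy_Schwarz_ineq_sum)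
  also have "\<dots> = frob2 I J M * nrm2 J v"
    by (simp add: frob2_def sum_distrib_right)
  finally show ?thesis .
qed

lemma frob2_nonneg: "0 \<le> frob2 I J M"
  unfolding frob2_def by (auto intro!: sum_nonneg)

definition opset :: "nat set \<Rightarrow> nat set \<Rightarrow> (nat \<Rightarrow> nat \<Rightarrow> real) \<Rightarrow> real set" where
  "opset I J M = {sqrt (nrm2 I (mv J M v)) | v. nrm2 J v \<le> 1}"

lemma opnorm_opset: "opnorm I J M = Sup (opset I J M)"
  unfolding opnorm_def opset_def nrm2_def mv_def by simp

lemma opset_bdd: "bdd_above (opset I J M)"
proof (rule bdd_aboveI)
  fix x assume "x \<in> opset I J M"
  then obtain v where x: "x = sqrt (nrm2 I (mv J M v))" and v: "nrm2 J v \<le> 1"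
    unfolding opset_def by auto
  have "nrm2 I (mv J M v) \<le> frob2 I J M * nrm2 J v" by (rule mv_bound)
  also have "\<dots> \<le> frob2 I J M" using v frob2_nonneg[of I J M]
    by (simp add: mult_left_le)
  finally show "x \<le> sqrt (frob2 I J M)" using x by simp
qed

lemma opset_ne: "opset I J M \<noteq> {}"
proof -
  have "nrm2 J (\<lambda>_. 0) \<le> 1" by (simp add: nrm2_def)
  thus ?thesis unfolding opset_def by blast
qed

lemma opnorm_ge: "nrm2 J v \<le> 1 \<Longrightarrow> sqrt (nrm2 I (mv J M v)) \<le> opnorm I J M"
  unfolding opnorm_opset by (rule cSup_upper[OF _ opset_bdd]) (auto simp: opset_def)

lemma opnorm_nonneg: "0 \<le> opnorm I J M"
proof -
  have "sqrt (nrm2 I (mv J M (\<lambda>_. 0))) \<le> opnorm I J M"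
    by (rule opnorm_ge) (simp add: nrm2_def)
  moreover have "mv J M (\<lambda>_. 0) = (\<lambda>_. 0)" by (simp add: mv_def)
  ultimately show ?thesis by (simp add: nrm2_def)
qed

lemma opnorm_le:
  assumes "\<And>v. nrm2 J v \<le> 1 \<Longrightarrow> sqrt (nrm2 I (mv J M v)) \<le> c"
  shows "opnorm I J M \<le> c"
  unfolding opnorm_opset using assms by (intro cSup_least[OF opset_ne]) (auto simp: opset_def)

lemma opnorm_scaled:
  assumes "finite J"
  shows "sqrt (nrm2 I (mv J M w)) \<le> opnorm I J M * sqrt (nrm2 J w)"
proof (cases "nrm2 J w = 0")
  case True
  hence "\<forall>j\<in>J. w j = 0" using nrm2_zero_iff[OF assms] by blast
  hence "mv J M w i = 0" for i by (simp add: mv_def)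
  thus ?thesis using True by (simp add: nrm2_def)
next
  case False
  define s where "s = sqrt (nrm2 J w)"
  have s: "s > 0" using False nrm2_nonneg[of J w] unfolding s_def by (simp add: order_less_le)
  define v where "v = (\<lambda>j. (1/s) * w j)"
  have "nrm2 J v = (1/s)\<^sup>2 * nrm2 J w" unfolding v_def by (rule nrm2_scale)
  also have "\<dots> = 1" using s unfolding s_def by (simp add: power_divide)
  finally have "sqrt (nrm2 I (mv J M v)) \<le> opnorm I J M" by (intro opnorm_ge) simp
  moreover have "mv J M v = (\<lambda>i. (1/s) * mv J M w i)"
    unfolding v_def by (rule ext, rule mv_scale)
  ultimately have "sqrt ((1/s)\<^sup>2 * nrm2 I (mv J M w)) \<le> opnorm I J M"
    using nrm2_scale[of I "1/s" "mv J M w"] by simp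
  hence "(1/s) * sqrt (nrm2 I (mv J M w)) \<le> opnorm I J M" using s
    by (simp add: real_sqrt_mult)
  thus ?thesis using s unfolding s_def[symmetric] by (simp add: field_simps)
qed

lemma bilin_bound:
  assumes "finite J"
  shows "\<bar>\<Sum>i\<in>I. a i * mv J M b i\<bar> \<le> sqrt (nrm2 I a) * opnorm I J M * sqrt (nrm2 J b)"
proof -
  have "\<bar>\<Sum>i\<in>I. a i * mv J M b i\<bar> \<le> sqrt (nrm2 I a) * sqrt (nrm2 I (mv J M b))"
    by (rule CS_abs)
  also have "\<dots> \<le> sqrt (nrm2 I a) * (opnorm I J M * sqrt (nrm2 J b))"
    by (intro mult_left_mono opnorm_scaled assms) simp
  finally show ?thesis by (simp add: mult.assoc)
qed

lemma frob2_rank1_expand: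
  "frob2 I J (\<lambda>i j. A i j - u i * v j) =
     frob2 I J A - 2 * (\<Sum>i\<in>I. u i * mv J A v i) + nrm2 I u * nrm2 J v"
proof -
  have "frob2 I J (\<lambda>i j. A i j - u i * v j) =
      (\<Sum>i\<in>I. \<Sum>j\<in>J. (A i j)\<^sup>2 - 2 * (u i * (A i j * v j)) + (u i)\<^sup>2 * (v j)\<^sup>2)"
    unfolding frob2_def by (intro sum.cong refl) (simp add: power2_eq_square algebra_simps)
  also have "\<dots> = frob2 I J A - 2 * (\<Sum>i\<in>I. u i * mv J A v i) + nrm2 I u * nrm2 J v"
    by (simp add: sum.distrib sum_subtractf frob2_def mv_def nrm2_def sum_distrib_left
        sum_distrib_right sum.swap[of _ J I])
  finally show ?thesis .
qed

lemma rank1_lower: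
  assumes "finite J" "R \<in> rank_le1"
  shows "frob2 I J (\<lambda>i j. A i j - R i j) \<ge> frob2 I J A - (opnorm I J A)\<^sup>2"
proof -
  obtain u v where R: "\<And>i j. R i j = u i * v j" using assms(2) unfolding rank_le1_def by blast
  define x where "x = sqrt (nrm2 I u) * sqrt (nrm2 J v)"
  define o' where "o' = opnorm I J A"
  have x2: "x\<^sup>2 = nrm2 I u * nrm2 J v" unfolding x_def by (simp add: power_mult_distrib)
  have "\<bar>\<Sum>i\<in>I. u i * mv J A v i\<bar> \<le> sqrt (nrm2 I u) * o' * sqrt (nrm2 J v)"
    unfolding o'_def by (rule bilin_bound[OF assms(1)])
  hence b: "(\<Sum>i\<in>I. u i * mv J A v i) \<le> o' * x" unfolding x_def by (simp add: algebra_simps)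
  have "frob2 I J (\<lambda>i j. A i j - R i j) = frob2 I J A - 2 * (\<Sum>i\<in>I. u i * mv J A v i) + x\<^sup>2"
    unfolding R x2 by (rule frob2_rank1_expand)
  also have "\<dots> \<ge> frob2 I J A - 2 * (o' * x) + x\<^sup>2" using b by linarith
  moreover have "frob2 I J A - 2 * (o' * x) + x\<^sup>2 \<ge> frob2 I J A - o'\<^sup>2"
    using sum_squares_ge_zero[of "x - o'" 0] by (simp add: power2_eq_square algebra_simps)
  ultimately show ?thesis unfolding o'_def by linarith
qed

lemma swap_bilin:
  "(\<Sum>i\<in>I. a i * mv J Y b i) = (\<Sum>j\<in>J. b j * mv I (\<lambda>j i. Y i j) a j)"
  unfolding mv_def by (simp add: sum_distrib_left sum.swap[of _ J I] algebra_simps)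

lemma compact_ball_fun:
  assumes "finite I"
  shows "compact {u::nat \<Rightarrow> real. (\<forall>i. u i \<in> (if i \<in> I then {-1..1} else {0})) \<and> nrm2 I u \<le> 1}"
proof -
  define S where "S = (\<lambda>i::nat. if i \<in> I then {-1..(1::real)} else {0})"
  have "compactin (product_topology (\<lambda>_. euclidean) UNIV) (PiE UNIV S)"
    by (subst compactin_PiE) (auto simp: S_def)
  hence c1: "compact (PiE UNIV S)" by (simp add: euclidean_product_topology)
  have c2: "closed {u::nat \<Rightarrow> real. nrm2 I u \<le> 1}"
    unfolding nrm2_def by (intro closed_Collect_le continuous_intros continuous_on_product_coordinates)
  have "{u::nat \<Rightarrow> real. (\<forall>i. u i \<in> S i) \<and> nrm2 I u \<le> 1} = PiE UNIV S \<inter> {u. nrm2 I u \<le> 1}"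
    by (auto simp: PiE_UNIV_domain)
  moreover have "compact (PiE UNIV S \<inter> {u. nrm2 I u \<le> 1})" using c1 c2 by blast
  ultimately show ?thesis unfolding S_def by simp
qed

lemma best_rank1_exists:
  assumes fI: "finite I" and fJ: "finite J"
  shows "\<exists>R\<in>rank_le1. \<forall>R'\<in>rank_le1. frob2 I J (\<lambda>i j. Y i j - R i j) \<le> frob2 I J (\<lambda>i j. Y i j - R' i j)"
proof -
  define Yt where "Yt = (\<lambda>j i. Y i j)"
  define g where "g = (\<lambda>u. nrm2 J (mv I Yt u))"
  define B where "B = {u::nat \<Rightarrow> real. (\<forall>i. u i \<in> (if i \<in> I then {-1..1} else {0})) \<and> nrm2 I u \<le> 1}"
  have cB: "compact B" unfolding B_def by (rule compact_ball_fun[OF fI])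
  have B0: "(\<lambda>_. 0) \<in> B" unfolding B_def by (simp add: nrm2_def)
  have cg: "continuous_on B g"
    unfolding g_def nrm2_def mv_def
    by (intro continuous_intros continuous_on_subset[OF continuous_on_product_coordinates]) auto
  obtain us where us: "us \<in> B" and usmax: "\<And>y. y \<in> B \<Longrightarrow> g y \<le> g us"
    using continuous_attains_sup[OF cB _ cg] B0 by blast
  define m where "m = g us"
  have m0: "m \<ge> 0" unfolding m_def g_def by simp
  define FY where "FY = frob2 I J Y"
  have lower: "frob2 I J (\<lambda>i j. Y i j - R' i j) \<ge> FY - m" if hR: "R' \<in> rank_le1" for R'
  proof -
    obtain a b where R': "\<And>i j. R' i j = a i * b j" using hR unfolding rank_le1_def by blast
    define na where "na = nrm2 I a"
    define nb where "nb = nrm2 J b"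
    have ga: "g a \<le> m * na"
    proof (cases "na = 0")
      case True
      hence "\<forall>i\<in>I. a i = 0" using nrm2_zero_iff[OF fI] unfolding na_def by blast
      hence "mv I Yt a j = 0" for j by (simp add: mv_def)
      thus ?thesis unfolding g_def nrm2_def using True by simp
    next
      case False
      hence na: "na > 0" unfolding na_def using nrm2_nonneg[of I a] by linarith
      define a' where "a' = (\<lambda>i. if i \<in> I then (1 / sqrt na) * a i else 0)"
      have "nrm2 I a' = nrm2 I (\<lambda>i. (1 / sqrt na) * a i)"
        unfolding nrm2_def a'_def by (intro sum.cong) auto
      also have "\<dots> = (1 / sqrt na)\<^sup>2 * na" unfolding na_def by (rule nrm2_scale)
      also have "\<dots> = 1" using na by (simp add: power_divide)
      finally have na': "nrm2 I a' = 1" .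
      have "a' \<in> B"
      proof -
        have "(a' i)\<^sup>2 \<le> 1" if "i \<in> I" for i
          using member_le_sum[of i I "\<lambda>i. (a' i)\<^sup>2"] that fI na' unfolding nrm2_def by simp
        hence "\<bar>a' i\<bar> \<le> 1" if "i \<in> I" for i using that abs_le_square_iff[of "a' i" 1] by simp
        hence "a' i \<in> {-1..1}" if "i \<in> I" for i using that by (simp add: abs_le_iff)
        thus ?thesis unfolding B_def using na' by (auto simp: a'_def)
      qed
      hence "g a' \<le> m" unfolding m_def by (rule usmax)
      moreover have "mv I Yt a' = (\<lambda>j. (1 / sqrt na) * mv I Yt a j)"
      proof
        fix j show "mv I Yt a' j = (1 / sqrt na) * mv I Yt a j"
          unfolding mv_def a'_def by (simp add: sum_distrib_left algebra_simps)
      qed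
      ultimately have "(1 / sqrt na)\<^sup>2 * g a \<le> m" unfolding g_def
        using nrm2_scale[of J "1 / sqrt na" "mv I Yt a"] by simp
      thus ?thesis using na by (simp add: power_divide field_simps)
    qed
    have "(\<Sum>i\<in>I. a i * mv J Y b i) = (\<Sum>j\<in>J. b j * mv I Yt a j)"
      unfolding Yt_def by (rule swap_bilin)
    also have "\<dots> \<le> sqrt nb * sqrt (g a)" unfolding nb_def g_def by (rule CS)
    also have "\<dots> \<le> sqrt nb * sqrt (m * na)"
      by (intro mult_left_mono real_sqrt_le_mono ga) (simp add: nb_def)
    finally have c: "(\<Sum>i\<in>I. a i * mv J Y b i) \<le> sqrt (na * nb) * sqrt m"
      by (simp add: real_sqrt_mult algebra_simps)
    have "frob2 I J (\<lambda>i j. Y i j - R' i j) = FY - 2 * (\<Sum>i\<in>I. a i * mv J Y b i) + na * nb"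
      unfolding R' FY_def na_def nb_def by (rule frob2_rank1_expand)
    also have "\<dots> \<ge> FY - 2 * (sqrt (na * nb) * sqrt m) + na * nb" using c by linarith
    moreover have "FY - 2 * (sqrt (na * nb) * sqrt m) + na * nb \<ge> FY - m"
    proof -
      have "0 \<le> (sqrt (na * nb) - sqrt m)\<^sup>2" by simp
      moreover have "(sqrt (na * nb))\<^sup>2 = na * nb" unfolding na_def nb_def by simp
      moreover have "(sqrt m)\<^sup>2 = m" using m0 by simp
      ultimately show ?thesis by (simp add: power2_diff)
    qed
    ultimately show ?thesis by linarith
  qed
  define nu where "nu = nrm2 I us"
  show ?thesis
  proof (cases "nu = 0")
    case True
    hence "\<forall>i\<in>I. us i = 0" using nrm2_zero_iff[OF fI] unfolding nu_def by blast
    hence "mv I Yt us j = 0" for j by (simp add: mv_def)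
    hence "m = 0" unfolding m_def g_def nrm2_def by simp
    have r0: "(\<lambda>i j. 0::real) \<in> rank_le1" unfolding rank_le1_def by (rule CollectI, rule exI[of _ "\<lambda>_. 0"]) simp
    show ?thesis
      by (rule bexI[OF _ r0]) (use lower \<open>m = 0\<close> in \<open>auto simp: FY_def\<close>)
  next
    case False
    hence nu: "nu > 0" "nu \<le> 1" using us nrm2_nonneg[of I us] unfolding nu_def B_def by (auto simp: order_less_le)
    define w where "w = (\<lambda>j. (1/nu) * mv I Yt us j)"
    define R where "R = (\<lambda>i j. us i * w j)"
    have rR: "R \<in> rank_le1" unfolding rank_le1_def R_def by blast
    have "(\<Sum>i\<in>I. us i * mv J Y w i) = (\<Sum>j\<in>J. w j * mv I Yt us j)"
      unfolding Yt_def by (rule swap_bilin)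
    also have "\<dots> = (1/nu) * m" unfolding w_def m_def g_def nrm2_def
      by (simp add: sum_distrib_left power2_eq_square algebra_simps)
    finally have e1: "(\<Sum>i\<in>I. us i * mv J Y w i) = m / nu" by simp
    have e2: "nrm2 J w = (1/nu)\<^sup>2 * m" unfolding w_def m_def g_def by (rule nrm2_scale)
    have "frob2 I J (\<lambda>i j. Y i j - R i j) = FY - 2 * (m / nu) + nu * ((1/nu)\<^sup>2 * m)"
      unfolding R_def FY_def frob2_rank1_expand e1 e2 nu_def ..
    also have "\<dots> = FY - m / nu" using nu by (simp add: power2_eq_square field_simps)
    also have "\<dots> \<le> FY - m" using nu m0 by (simp add: field_simps mult_left_le)
    finally show ?thesis using lower rR by (meson order_trans)
  qed
qed

lemma best_rank1_prop:
  assumes "finite I" "finite J"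
  shows "best_rank1 I J Y \<in> rank_le1 \<and>
    (\<forall>R'\<in>rank_le1. frob2 I J (\<lambda>i j. Y i j - best_rank1 I J Y i j) \<le> frob2 I J (\<lambda>i j. Y i j - R' i j))"
proof -
  have "\<exists>R. R \<in> rank_le1 \<and> (\<forall>R'\<in>rank_le1. frob2 I J (\<lambda>i j. Y i j - R i j) \<le> frob2 I J (\<lambda>i j. Y i j - R' i j))"
    using best_rank1_exists[OF assms, of Y] by blast
  from someI_ex[OF this] show ?thesis unfolding best_rank1_def .
qed

lemma geo2: "(\<Sum>c\<le>N. (2::nat)^(N-c)) + 1 = 2^(Suc N)"
proof (induction N)
  case 0 then show ?case by simp
next
  case (Suc N)
  have "(\<Sum>c\<le>Suc N. (2::nat)^(Suc N-c)) = 1 + (\<Sum>c\<le>N. 2^(Suc N-c))"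
    by (simp add: atMost_Suc)
  also have "(\<Sum>c\<le>N. (2::nat)^(Suc N-c)) = 2 * (\<Sum>c\<le>N. 2^(N-c))"
    by (simp add: sum_distrib_left Suc_diff_le flip: power_Suc)
  finally show ?case using Suc by simp
qed

definition natvec :: "'a set \<Rightarrow> nat \<Rightarrow> ('a \<Rightarrow> nat) set" where
  "natvec R N = {m. (\<forall>i. i \<notin> R \<longrightarrow> m i = 0) \<and> (\<Sum>i\<in>R. m i) \<le> N}"

lemma natvec_card:
  assumes "finite R"
  shows "finite (natvec R N) \<and> card (natvec R N) \<le> 2^(card R + N)"
  using assms
proof (induction R arbitrary: N rule: finite_induct)
  case empty
  have "natvec ({}::'a set) N = {\<lambda>_. 0}" unfolding natvec_def by auto
  moreover have "(1::nat) \<le> 2^N" by simp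
  ultimately show ?case by simp
next
  case (insert a R)
  define \<phi> where "\<phi> = (\<lambda>m::'a \<Rightarrow> nat. (m a, m(a:=0)))"
  define T where "T = Sigma {..N} (\<lambda>c. natvec R (N - c))"
  have inj: "inj_on \<phi> (natvec (insert a R) N)"
  proof (rule inj_onI)
    fix x y assume "\<phi> x = \<phi> y"
    hence "x a = y a" "x(a:=0) = y(a:=0)" unfolding \<phi>_def by auto
    thus "x = y" by (metis fun_upd_triv fun_upd_upd)
  qed
  have sub: "\<phi> ` natvec (insert a R) N \<subseteq> T"
  proof
    fix p assume "p \<in> \<phi> ` natvec (insert a R) N"
    then obtain m where m: "m \<in> natvec (insert a R) N" and p: "p = \<phi> m" by blast
    have s: "m a + (\<Sum>i\<in>R. m i) \<le> N" using m insert.hyps unfolding natvec_def by simp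
    have "(\<Sum>i\<in>R. (m(a:=0)) i) = (\<Sum>i\<in>R. m i)"
      using insert.hyps by (intro sum.cong) auto
    hence "m(a:=0) \<in> natvec R (N - m a)" using m s unfolding natvec_def by auto
    moreover have "m a \<le> N" using s by simp
    ultimately show "p \<in> T" unfolding T_def p \<phi>_def by simp
  qed
  have fT: "finite T" unfolding T_def using insert.IH by auto
  have "card T = (\<Sum>c\<le>N. card (natvec R (N - c)))" unfolding T_def
    by (rule card_SigmaI) (use insert.IH in auto)
  also have "\<dots> \<le> (\<Sum>c\<le>N. 2^(card R + (N - c)))"
  proof (intro sum_mono)
    fix c show "card (natvec R (N - c)) \<le> 2^(card R + (N - c))" using insert.IH[of "N - c"] by blast
  qed
  also have "\<dots> = 2^(card R) * (\<Sum>c\<le>N. 2^(N - c))"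
    unfolding sum_distrib_left by (intro sum.cong refl) (simp only: power_add)
  also have "\<dots> \<le> 2^(card R) * 2^(Suc N)" using geo2[of N] by simp
  also have "\<dots> = 2^(card (insert a R) + N)" using insert.hyps by (simp add: power_add)
  finally have cT: "card T \<le> 2^(card (insert a R) + N)" .
  have fin: "finite (natvec (insert a R) N)"
    using inj sub fT by (meson finite_imageD finite_subset)
  have "card (natvec (insert a R) N) = card (\<phi> ` natvec (insert a R) N)"
    using card_image[OF inj] by simp
  also have "\<dots> \<le> card T" using sub fT by (rule card_mono[rotated])
  finally show ?case using fin cT by simp
qed

definition intvec :: "'a set \<Rightarrow> nat \<Rightarrow> ('a \<Rightarrow> int) set" where
  "intvec R N = {m. (\<forall>i. i \<notin> R \<longrightarrow> m i = 0) \<and> (\<Sum>i\<in>R. \<bar>m i\<bar>) \<le> int N}"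

lemma intvec_card:
  assumes "finite R"
  shows "finite (intvec R N) \<and> card (intvec R N) \<le> 2^(2 * (card R + N))"
proof -
  define \<psi> where "\<psi> = (\<lambda>m::'a \<Rightarrow> int. (\<lambda>i. nat (m i), \<lambda>i. nat (- m i)))"
  have inj: "inj_on \<psi> (intvec R N)"
  proof (rule inj_onI)
    fix x y assume "\<psi> x = \<psi> y"
    hence e1: "(\<lambda>i. nat (x i)) = (\<lambda>i. nat (y i))" and e2: "(\<lambda>i. nat (- x i)) = (\<lambda>i. nat (- y i))"
      unfolding \<psi>_def by simp_all
    have "x i = y i" for i
    proof -
      have z: "\<And>z::int. z = int (nat z) - int (nat (- z))" by simp
      have "nat (x i) = nat (y i)" "nat (- x i) = nat (- y i)" using e1 e2 by (simp_all add: fun_eq_iff)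
      thus ?thesis using z[of "x i"] z[of "y i"] by simp
    qed
    thus "x = y" by auto
  qed
  have sub: "\<psi> ` intvec R N \<subseteq> natvec R N \<times> natvec R N"
  proof
    fix p assume "p \<in> \<psi> ` intvec R N"
    then obtain m where m: "m \<in> intvec R N" and p: "p = \<psi> m" by blast
    have a: "(\<Sum>i\<in>R. nat (m i)) \<le> N"
    proof -
      have "int (\<Sum>i\<in>R. nat (m i)) = (\<Sum>i\<in>R. int (nat (m i)))" by simp
      also have "\<dots> \<le> (\<Sum>i\<in>R. \<bar>m i\<bar>)" by (intro sum_mono) simp
      also have "\<dots> \<le> int N" using m unfolding intvec_def by simp
      finally show ?thesis by linarith
    qed
    have b: "(\<Sum>i\<in>R. nat (- m i)) \<le> N"
    proof -
      have "int (\<Sum>i\<in>R. nat (- m i)) = (\<Sum>i\<in>R. int (nat (- m i)))" by simp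
      also have "\<dots> \<le> (\<Sum>i\<in>R. \<bar>m i\<bar>)" by (intro sum_mono) simp
      also have "\<dots> \<le> int N" using m unfolding intvec_def by simp
      finally show ?thesis by linarith
    qed
    show "p \<in> natvec R N \<times> natvec R N" using m a b unfolding p \<psi>_def natvec_def intvec_def by auto
  qed
  have f: "finite (natvec R N)" and c: "card (natvec R N) \<le> 2^(card R + N)"
    using natvec_card[OF assms] by auto
  have fin: "finite (intvec R N)" using inj sub f by (meson finite_SigmaI finite_imageD finite_subset)
  have "card (intvec R N) = card (\<psi> ` intvec R N)" using card_image[OF inj] by simp
  also have "\<dots> \<le> card (natvec R N \<times> natvec R N)" using sub f by (intro card_mono) auto
  also have "\<dots> = card (natvec R N) * card (natvec R N)" by (simp add: card_cartesian_product)
  also have "\<dots> \<le> 2^(card R + N) * 2^(card R + N)" using c by (intro mult_mono) auto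
  also have "\<dots> = 2^(2 * (card R + N))" by (simp add: power_add[symmetric])
  finally show ?thesis using fin by simp
qed

definition hstep :: "'a set \<Rightarrow> real" where
  "hstep R = 1 / (4 * sqrt (real (card R)))"

definition netpts :: "'a set \<Rightarrow> ('a \<Rightarrow> real) set" where
  "netpts R = {w. (\<exists>m\<in>intvec R (4 * card R). w = (\<lambda>i. hstep R * of_int (m i))) \<and> nrm2 R w \<le> 1}"

lemma netpts_card:
  assumes "finite R"
  shows "finite (netpts R) \<and> card (netpts R) \<le> 2^(10 * card R)"
proof -
  have sub: "netpts R \<subseteq> (\<lambda>m i. hstep R * of_int (m i)) ` intvec R (4 * card R)"
    unfolding netpts_def by auto
  have f: "finite (intvec R (4 * card R))" and c: "card (intvec R (4 * card R)) \<le> 2^(2 * (card R + 4 * card R))"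
    using intvec_card[OF assms, of "4 * card R"] by auto
  have "card (netpts R) \<le> card ((\<lambda>m i. hstep R * of_int (m i)) ` intvec R (4 * card R))"
    using sub f by (intro card_mono) auto
  also have "\<dots> \<le> card (intvec R (4 * card R))" by (rule card_image_le[OF f])
  also have "\<dots> \<le> 2^(10 * card R)" using c by (simp add: algebra_simps del: power_mult)
  finally show ?thesis using sub f by (meson finite_imageI finite_subset)
qed

lemma netpts_props:
  assumes "w \<in> netpts R"
  shows "nrm2 R w \<le> 1" "\<And>i. i \<notin> R \<Longrightarrow> w i = 0"
  using assms unfolding netpts_def intvec_def by auto

lemma trunc_props:
  fixes x :: real
  defines "m \<equiv> (if x \<ge> 0 then \<lfloor>x\<rfloor> else \<lceil>x\<rceil>)"
  shows "\<bar>real_of_int m\<bar> \<le> \<bar>x\<bar>" "\<bar>x - real_of_int m\<bar> \<le> 1"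
proof -
  have a: "\<bar>real_of_int m\<bar> \<le> \<bar>x\<bar> \<and> \<bar>x - real_of_int m\<bar> \<le> 1"
  proof (cases "x \<ge> 0")
    case True
    hence "m = \<lfloor>x\<rfloor>" unfolding m_def by simp
    moreover have "real_of_int \<lfloor>x\<rfloor> \<le> x" "x < real_of_int \<lfloor>x\<rfloor> + 1" "0 \<le> \<lfloor>x\<rfloor>"
      using True by (simp_all add: of_int_floor_le)
    ultimately show ?thesis using True by (simp add: abs_le_iff abs_of_nonneg) linarith
  next
    case False
    hence "m = \<lceil>x\<rceil>" unfolding m_def by simp
    moreover have "x \<le> real_of_int \<lceil>x\<rceil>" "real_of_int \<lceil>x\<rceil> < x + 1" "\<lceil>x\<rceil> \<le> 0"
      using False ceiling_correct[of x] by (simp_all add: le_of_int_ceiling)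
    ultimately show ?thesis using False by (simp add: abs_le_iff)
  qed
  thus "\<bar>real_of_int m\<bar> \<le> \<bar>x\<bar>" "\<bar>x - real_of_int m\<bar> \<le> 1" by auto
qed

lemma net_round:
  assumes fR: "finite R" and u: "nrm2 R u \<le> 1"
  shows "\<exists>w\<in>netpts R. nrm2 R (\<lambda>i. u i - w i) \<le> 1/16"
proof (cases "R = {}")
  case True
  have "(\<lambda>_. 0::int) \<in> intvec R (4 * card R)" unfolding intvec_def by simp
  hence "(\<lambda>_. 0::real) \<in> netpts R" unfolding netpts_def using True
    by (auto simp: nrm2_def intro!: bexI[of _ "\<lambda>_. 0"])
  thus ?thesis using True by (auto simp: nrm2_def)
next
  case False
  define d where "d = real (card R)"
  have d: "d > 0" using False fR unfolding d_def by (simp add: card_gt_0_iff)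
  define h where "h = hstep R"
  have h: "h > 0" "h * (4 * sqrt d) = 1" using d unfolding h_def hstep_def d_def by auto
  have hsq: "h\<^sup>2 * d = 1/16"
  proof -
    have "(h * (4 * sqrt d))\<^sup>2 = 1" using h by simp
    thus ?thesis using d by (simp add: power_mult_distrib)
  qed
  define m where "m = (\<lambda>i. if i \<in> R then (if u i / h \<ge> 0 then \<lfloor>u i / h\<rfloor> else \<lceil>u i / h\<rceil>) else 0)"
  define w where "w = (\<lambda>i. h * real_of_int (m i))"
  have p1: "\<bar>real_of_int (m i)\<bar> \<le> \<bar>u i / h\<bar>" "\<bar>u i / h - real_of_int (m i)\<bar> \<le> 1" if "i \<in> R" for i
    using trunc_props[of "u i / h"] that unfolding m_def by auto
  have wu: "(w i)\<^sup>2 \<le> (u i)\<^sup>2" if "i \<in> R" for i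
  proof -
    have "\<bar>w i\<bar> \<le> \<bar>u i\<bar>" using p1(1)[OF that] h unfolding w_def
      by (simp add: abs_mult field_simps)
    thus ?thesis by (simp add: abs_le_square_iff)
  qed
  have uw: "(u i - w i)\<^sup>2 \<le> h\<^sup>2" if "i \<in> R" for i
  proof -
    have "u i - w i = h * (u i / h - real_of_int (m i))" using h unfolding w_def by (simp add: field_simps)
    hence "\<bar>u i - w i\<bar> \<le> h" using p1(2)[OF that] h by (simp add: abs_mult mult_left_le)
    hence "\<bar>u i - w i\<bar> \<le> \<bar>h\<bar>" using h by simp
    thus ?thesis by (simp only: abs_le_square_iff)
  qed
  have nw: "nrm2 R w \<le> 1"
  proof -
    have "nrm2 R w \<le> nrm2 R u" unfolding nrm2_def by (intro sum_mono wu)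
    thus ?thesis using u by linarith
  qed
  have sumabs: "(\<Sum>i\<in>R. \<bar>u i\<bar>) \<le> sqrt d"
  proof -
    have "(\<Sum>i\<in>R. 1 * \<bar>u i\<bar>) \<le> sqrt (nrm2 R (\<lambda>_. 1)) * sqrt (nrm2 R (\<lambda>i. \<bar>u i\<bar>))" by (rule CS)
    also have "nrm2 R (\<lambda>_. 1) = d" unfolding nrm2_def d_def by simp
    also have "nrm2 R (\<lambda>i. \<bar>u i\<bar>) = nrm2 R u" unfolding nrm2_def by simp
    also have "sqrt d * sqrt (nrm2 R u) \<le> sqrt d * 1" using u d by (intro mult_left_mono) auto
    finally show ?thesis by simp
  qed
  have "real_of_int (\<Sum>i\<in>R. \<bar>m i\<bar>) = (\<Sum>i\<in>R. \<bar>real_of_int (m i)\<bar>)" by simp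
  also have "\<dots> \<le> (\<Sum>i\<in>R. \<bar>u i\<bar> / h)" using p1(1) h by (intro sum_mono) (simp add: abs_div)
  also have "\<dots> = (\<Sum>i\<in>R. \<bar>u i\<bar>) / h" by (simp add: sum_divide_distrib)
  also have "\<dots> \<le> sqrt d / h" using sumabs h by (simp add: divide_right_mono)
  also have "\<dots> = 4 * d"
  proof -
    have sd: "sqrt d * sqrt d = d" using d by simp
    have "h = 1 / (4 * sqrt d)" using h d by (simp add: field_simps)
    hence "sqrt d / h = 4 * (sqrt d * sqrt d)" using d by simp
    thus ?thesis using sd by simp
  qed
  finally have "real_of_int (\<Sum>i\<in>R. \<bar>m i\<bar>) \<le> real_of_int (int (4 * card R))" unfolding d_def by simp
  hence "(\<Sum>i\<in>R. \<bar>m i\<bar>) \<le> int (4 * card R)" by (simp only: of_int_le_iff)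
  hence "m \<in> intvec R (4 * card R)" unfolding intvec_def m_def by auto
  hence wn: "w \<in> netpts R" using nw unfolding netpts_def w_def h_def by auto
  have "nrm2 R (\<lambda>i. u i - w i) \<le> (\<Sum>i\<in>R. h\<^sup>2)" unfolding nrm2_def by (intro sum_mono uw)
  also have "\<dots> = h\<^sup>2 * d" unfolding d_def by simp
  finally show ?thesis using wn hsq by auto
qed

lemma sum_of_sups:
  assumes "finite Bl"
    and "\<And>v. (\<forall>p\<in>Bl. nrm2 (Jc p) (v p) \<le> 1) \<Longrightarrow>
            (\<Sum>p\<in>Bl. nrm2 (Ir p) (mv (Jc p) E (v p))) \<le> B"
  shows "(\<Sum>p\<in>Bl. (opnorm (Ir p) (Jc p) E)\<^sup>2) \<le> B"
  using assms
proof (induction Bl arbitrary: B rule: finite_induct)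
  case empty
  thus ?case using empty.prems[of "\<lambda>_ _. 0"] by simp
next
  case (insert a Bl)
  define g where "g = (\<lambda>w. nrm2 (Ir a) (mv (Jc a) E w))"
  define c where "c = B - (\<Sum>p\<in>Bl. (opnorm (Ir p) (Jc p) E)\<^sup>2)"
  have key: "g w \<le> c" if w: "nrm2 (Jc a) w \<le> 1" for w
  proof -
    have "(\<Sum>p\<in>Bl. (opnorm (Ir p) (Jc p) E)\<^sup>2) \<le> B - g w"
    proof (rule insert.IH)
      fix v assume v: "\<forall>p\<in>Bl. nrm2 (Jc p) (v p) \<le> 1"
      define v' where "v' = v(a := w)"
      have "\<forall>p\<in>insert a Bl. nrm2 (Jc p) (v' p) \<le> 1" using v w unfolding v'_def by auto
      hence "(\<Sum>p\<in>insert a Bl. nrm2 (Ir p) (mv (Jc p) E (v' p))) \<le> B" using insert.prems by blast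
      moreover have "(\<Sum>p\<in>insert a Bl. nrm2 (Ir p) (mv (Jc p) E (v' p))) =
          g w + (\<Sum>p\<in>Bl. nrm2 (Ir p) (mv (Jc p) E (v p)))"
        using insert.hyps unfolding v'_def g_def by (simp add: sum.insert) (intro sum.cong, auto)
      ultimately show "(\<Sum>p\<in>Bl. nrm2 (Ir p) (mv (Jc p) E (v p))) \<le> B - g w" by linarith
    qed
    thus ?thesis unfolding c_def by linarith
  qed
  have c0: "c \<ge> 0"
  proof -
    have "g (\<lambda>_. 0) \<le> c" by (rule key) (simp add: nrm2_def)
    moreover have "g (\<lambda>_. 0) = 0" unfolding g_def nrm2_def mv_def by simp
    ultimately show ?thesis by simp
  qed
  have "opnorm (Ir a) (Jc a) E \<le> sqrt c"
    by (rule opnorm_le) (use key in \<open>auto simp: g_def\<close>)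
  hence "(opnorm (Ir a) (Jc a) E)\<^sup>2 \<le> c" using opnorm_nonneg c0
    by (metis power2_le_iff_abs_le real_sqrt_abs2 real_sqrt_ge_zero abs_of_nonneg real_sqrt_pow2)
  thus ?case using insert.hyps unfolding c_def by simp
qed

lemma nrm2_supp:
  assumes "A \<subseteq> B" "finite B" "\<And>i. i \<in> B \<Longrightarrow> i \<notin> A \<Longrightarrow> f i = 0"
  shows "nrm2 B f = nrm2 A f"
  unfolding nrm2_def using assms by (intro sum.mono_neutral_right) auto

lemma nrm2_mono_set:
  assumes "A \<subseteq> B" "finite B"
  shows "nrm2 A f \<le> nrm2 B f"
  unfolding nrm2_def using assms by (intro sum_mono2) auto

lemma zero_netpts: "(\<lambda>_. 0) \<in> netpts R"
  unfolding netpts_def intvec_def nrm2_def by (auto intro!: bexI[of _ "\<lambda>_. 0"])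

locale blocks =
  fixes Blk :: "(nat \<times> nat) set" and Ir Jc Rr Rc :: "nat \<times> nat \<Rightarrow> nat set"
    and E :: "nat \<Rightarrow> nat \<Rightarrow> real"
  assumes finB: "finite Blk"
    and finI: "\<And>p. p \<in> Blk \<Longrightarrow> finite (Ir p)"
    and finJ: "\<And>p. p \<in> Blk \<Longrightarrow> finite (Jc p)"
    and RrI: "\<And>p. p \<in> Blk \<Longrightarrow> Rr p \<subseteq> Ir p"
    and RcJ: "\<And>p. p \<in> Blk \<Longrightarrow> Rc p \<subseteq> Jc p"
    and supp: "\<And>p i j. p \<in> Blk \<Longrightarrow> i \<in> Ir p \<Longrightarrow> j \<in> Jc p \<Longrightarrow> E i j \<noteq> 0 \<Longrightarrow> i \<in> Rr p \<and> j \<in> Rc p"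
begin

definition "Sset = {p\<in>Blk. Rr p \<noteq> {}}"
definition "bl p a b = (\<Sum>i\<in>Ir p. a i * mv (Jc p) E b i)"
definition "Ff U V X = (\<Sum>p\<in>Blk. X p * bl p (U p) (V p))"
definition "on p = opnorm (Ir p) (Jc p) E"
definition "Nsum = (\<Sum>p\<in>Blk. (on p)\<^sup>2)"
definition "nets = {(U, V, X). U \<in> PiE Blk (\<lambda>p. netpts (Rr p)) \<and> V \<in> PiE Blk (\<lambda>p. netpts (Rc p))
                       \<and> X \<in> netpts Sset}"

lemma Sset_sub: "Sset \<subseteq> Blk" unfolding Sset_def by auto

lemma bl_diff1: "bl p (\<lambda>i. a i - a' i) b = bl p a b - bl p a' b"
  unfolding bl_def by (simp add: algebra_simps sum_subtractf)

lemma bl_diff2: "bl p a (\<lambda>j. b j - b' j) = bl p a b - bl p a b'"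
  unfolding bl_def mv_def by (simp add: algebra_simps sum_subtractf sum_distrib_left)

lemma bl_bound: "p \<in> Blk \<Longrightarrow> \<bar>bl p a b\<bar> \<le> sqrt (nrm2 (Ir p) a) * on p * sqrt (nrm2 (Jc p) b)"
  unfolding bl_def on_def by (rule bilin_bound[OF finJ])

lemma on_nonneg: "0 \<le> on p" unfolding on_def by (rule opnorm_nonneg)

lemma sum_abs_on: "(\<Sum>p\<in>Blk. \<bar>c p\<bar> * on p) \<le> sqrt (nrm2 Blk c) * sqrt Nsum"
proof -
  have "(\<Sum>p\<in>Blk. \<bar>c p\<bar> * on p) \<le> sqrt (nrm2 Blk (\<lambda>p. \<bar>c p\<bar>)) * sqrt (nrm2 Blk on)" by (rule CS)
  also have "nrm2 Blk (\<lambda>p. \<bar>c p\<bar>) = nrm2 Blk c" unfolding nrm2_def by simp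
  also have "nrm2 Blk on = Nsum" unfolding nrm2_def Nsum_def ..
  finally show ?thesis .
qed

lemma zero_in_nets: "((\<lambda>p\<in>Blk. \<lambda>_. 0), (\<lambda>p\<in>Blk. \<lambda>_. 0), (\<lambda>_. 0)) \<in> nets"
proof -
  have a: "(\<lambda>_. 0) \<in> netpts Sset" by (rule zero_netpts)
  have b: "(\<lambda>p\<in>Blk. \<lambda>_. 0) \<in> PiE Blk (\<lambda>p. netpts (Rr p))" using zero_netpts by auto
  have c: "(\<lambda>p\<in>Blk. \<lambda>_. 0) \<in> PiE Blk (\<lambda>p. netpts (Rc p))" using zero_netpts by auto
  show ?thesis unfolding nets_def using a b c by simp
qed

lemma Ff_zero: "Ff U V (\<lambda>_. 0) = 0" unfolding Ff_def by simp

lemma step_a: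
  assumes s: "\<forall>(U, V, X)\<in>nets. Ff U V X \<le> s"
    and hv: "\<forall>p\<in>Blk. nrm2 (Jc p) (v p) \<le> 1"
  shows "(\<Sum>p\<in>Blk. nrm2 (Ir p) (mv (Jc p) E (v p))) \<le> (s + 3/4 * sqrt Nsum)\<^sup>2"
proof -
  have s0: "s \<ge> 0" using s zero_in_nets Ff_zero by fastforce
  have N0: "Nsum \<ge> 0" unfolding Nsum_def by (auto intro: sum_nonneg)
  define y where "y = (\<lambda>p. mv (Jc p) E (v p))"
  define Q where "Q = (\<Sum>p\<in>Blk. nrm2 (Ir p) (y p))"
  have Q0: "Q \<ge> 0" unfolding Q_def by (auto intro: sum_nonneg)
  show ?thesis
  proof (cases "Q = 0")
    case True
    thus ?thesis unfolding Q_def y_def by simp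
  next
    case False
    hence Qp: "Q > 0" using Q0 by simp
    define q where "q = sqrt Q"
    have qp: "q > 0" using Qp unfolding q_def by simp
    define vr where "vr = (\<lambda>p j. if j \<in> Rc p then v p j else 0)"
    have mv_vr: "mv (Jc p) E (vr p) i = y p i" if "p \<in> Blk" "i \<in> Ir p" for p i
      unfolding y_def mv_def vr_def using supp[OF that] by (intro sum.cong) auto
    have y_supp: "y p i = 0" if "p \<in> Blk" "i \<in> Ir p" "i \<notin> Rr p" for p i
      unfolding y_def mv_def using supp[OF that(1,2)] that(3) by (intro sum.neutral) auto
    define ny where "ny = (\<lambda>p. sqrt (nrm2 (Ir p) (y p)))"
    have ny0: "ny p \<ge> 0" for p unfolding ny_def by simp
    have ny2: "(ny p)\<^sup>2 = nrm2 (Ir p) (y p)" for p unfolding ny_def by simp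
    define u where "u = (\<lambda>p i. if i \<in> Rr p then y p i / ny p else 0)"
    define x where "x = (\<lambda>p. if p \<in> Sset then ny p / q else 0)"
    have nyS: "ny p = 0" if "p \<in> Blk" "p \<notin> Sset" for p
    proof -
      have "Rr p = {}" using that unfolding Sset_def by auto
      hence "\<forall>i\<in>Ir p. y p i = 0" using y_supp[OF that(1)] by auto
      thus ?thesis unfolding ny_def nrm2_def by simp
    qed
    have nu: "nrm2 (Rr p) (u p) \<le> 1" if "p \<in> Blk" for p
    proof -
      have "nrm2 (Rr p) (u p) = nrm2 (Rr p) (\<lambda>i. (1 / ny p) * y p i)"
        unfolding nrm2_def u_def by (intro sum.cong) auto
      also have "\<dots> = (1 / ny p)\<^sup>2 * nrm2 (Rr p) (y p)" by (rule nrm2_scale)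
      also have "nrm2 (Rr p) (y p) = nrm2 (Ir p) (y p)"
        using RrI[OF that] finI[OF that] y_supp[OF that] by (intro nrm2_supp[symmetric]) auto
      also have "(1 / ny p)\<^sup>2 * nrm2 (Ir p) (y p) \<le> 1"
        unfolding ny2[symmetric] by (cases "ny p = 0") (simp_all add: power_divide)
      finally show ?thesis .
    qed
    have nx: "nrm2 Sset x \<le> 1"
    proof -
      have "nrm2 Sset x = (\<Sum>p\<in>Sset. (ny p)\<^sup>2 / Q)"
        unfolding nrm2_def x_def q_def using Q0 by (intro sum.cong) (auto simp: power_divide)
      also have "\<dots> \<le> (\<Sum>p\<in>Blk. (ny p)\<^sup>2 / Q)"
        using Sset_sub finB Q0 by (intro sum_mono2) auto
      also have "\<dots> = (\<Sum>p\<in>Blk. (ny p)\<^sup>2) / Q" by (simp add: sum_divide_distrib)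
      also have "(\<Sum>p\<in>Blk. (ny p)\<^sup>2) = Q" by (simp add: Q_def ny2)
      finally show ?thesis using Qp by simp
    qed
    have nvr: "nrm2 (Rc p) (vr p) \<le> 1" if "p \<in> Blk" for p
    proof -
      have "nrm2 (Rc p) (vr p) = nrm2 (Rc p) (v p)" unfolding nrm2_def vr_def by simp
      also have "\<dots> \<le> nrm2 (Jc p) (v p)" by (rule nrm2_mono_set[OF RcJ[OF that] finJ[OF that]])
      finally show ?thesis using hv that by fastforce
    qed
    have nvrJ: "nrm2 (Jc p) (vr p) = nrm2 (Rc p) (vr p)" if "p \<in> Blk" for p
      using RcJ[OF that] finJ[OF that] by (intro nrm2_supp) (auto simp: vr_def)
    have blval: "bl p (u p) (vr p) = ny p" if "p \<in> Blk" for p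
    proof -
      have "bl p (u p) (vr p) = (\<Sum>i\<in>Ir p. (y p i)\<^sup>2 / ny p)"
        unfolding bl_def using mv_vr[OF that] y_supp[OF that]
        by (intro sum.cong) (auto simp: u_def power2_eq_square)
      also have "\<dots> = (ny p)\<^sup>2 / ny p" unfolding ny2 nrm2_def by (simp add: sum_divide_distrib)
      also have "\<dots> = ny p" by (simp add: power2_eq_square)
      finally show ?thesis .
    qed
    have Ffval: "Ff u vr x = q"
    proof -
      have "Ff u vr x = (\<Sum>p\<in>Blk. (ny p)\<^sup>2 / q)"
        unfolding Ff_def using blval nyS by (intro sum.cong) (auto simp: x_def power2_eq_square)
      also have "\<dots> = Q / q" unfolding Q_def ny2 by (simp add: sum_divide_distrib)
      also have "\<dots> = q" using qp unfolding q_def by (simp add: field_simps)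
      finally show ?thesis .
    qed
    have "\<forall>p\<in>Blk. \<exists>w\<in>netpts (Rr p). nrm2 (Rr p) (\<lambda>i. u p i - w i) \<le> 1/16"
    proof
      fix p assume p: "p \<in> Blk"
      have "finite (Rr p)" using finI[OF p] RrI[OF p] finite_subset by blast
      thus "\<exists>w\<in>netpts (Rr p). nrm2 (Rr p) (\<lambda>i. u p i - w i) \<le> 1/16" using net_round nu[OF p] by blast
    qed
    then obtain U0 where U0: "\<And>p. p \<in> Blk \<Longrightarrow> U0 p \<in> netpts (Rr p) \<and> nrm2 (Rr p) (\<lambda>i. u p i - U0 p i) \<le> 1/16"
      by metis
    have "\<forall>p\<in>Blk. \<exists>w\<in>netpts (Rc p). nrm2 (Rc p) (\<lambda>i. vr p i - w i) \<le> 1/16"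
    proof
      fix p assume p: "p \<in> Blk"
      have "finite (Rc p)" using finJ[OF p] RcJ[OF p] finite_subset by blast
      thus "\<exists>w\<in>netpts (Rc p). nrm2 (Rc p) (\<lambda>i. vr p i - w i) \<le> 1/16" using net_round nvr[OF p] by blast
    qed
    then obtain V0 where V0: "\<And>p. p \<in> Blk \<Longrightarrow> V0 p \<in> netpts (Rc p) \<and> nrm2 (Rc p) (\<lambda>i. vr p i - V0 p i) \<le> 1/16"
      by metis
    have finS: "finite Sset" using Sset_sub finB finite_subset by blast
    obtain X0 where X0: "X0 \<in> netpts Sset" "nrm2 Sset (\<lambda>p. x p - X0 p) \<le> 1/16"
      using net_round[OF finS nx] by blast
    have innets: "(restrict U0 Blk, restrict V0 Blk, X0) \<in> nets"
      unfolding nets_def using U0 V0 X0 by auto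
    have FfU: "Ff (restrict U0 Blk) (restrict V0 Blk) X0 = Ff U0 V0 X0"
      unfolding Ff_def by (intro sum.cong) auto
    have FfUs: "Ff U0 V0 X0 \<le> s" using s innets FfU by fastforce
    have nU0: "nrm2 (Ir p) (U0 p) \<le> 1" if "p \<in> Blk" for p
    proof -
      have "nrm2 (Ir p) (U0 p) = nrm2 (Rr p) (U0 p)"
        using RrI[OF that] finI[OF that] netpts_props(2)[OF conjunct1[OF U0[OF that]]]
        by (intro nrm2_supp) auto
      thus ?thesis using netpts_props(1)[OF conjunct1[OF U0[OF that]]] by simp
    qed
    have nV0: "nrm2 (Jc p) (V0 p) \<le> 1" if "p \<in> Blk" for p
    proof -
      have "nrm2 (Jc p) (V0 p) = nrm2 (Rc p) (V0 p)"
        using RcJ[OF that] finJ[OF that] netpts_props(2)[OF conjunct1[OF V0[OF that]]]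
        by (intro nrm2_supp) auto
      thus ?thesis using netpts_props(1)[OF conjunct1[OF V0[OF that]]] by simp
    qed
    have duU: "nrm2 (Ir p) (\<lambda>i. u p i - U0 p i) \<le> 1/16" if "p \<in> Blk" for p
    proof -
      have "nrm2 (Ir p) (\<lambda>i. u p i - U0 p i) = nrm2 (Rr p) (\<lambda>i. u p i - U0 p i)"
        using RrI[OF that] finI[OF that] netpts_props(2)[OF conjunct1[OF U0[OF that]]]
        by (intro nrm2_supp) (auto simp: u_def)
      thus ?thesis using U0[OF that] by simp
    qed
    have dvV: "nrm2 (Jc p) (\<lambda>i. vr p i - V0 p i) \<le> 1/16" if "p \<in> Blk" for p
    proof -
      have "nrm2 (Jc p) (\<lambda>i. vr p i - V0 p i) = nrm2 (Rc p) (\<lambda>i. vr p i - V0 p i)"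
        using RcJ[OF that] finJ[OF that] netpts_props(2)[OF conjunct1[OF V0[OF that]]]
        by (intro nrm2_supp) (auto simp: vr_def)
      thus ?thesis using V0[OF that] by simp
    qed
    have sq4: "sqrt a \<le> 1/4" if "a \<le> 1/16" for a :: real
    proof -
      have "sqrt a \<le> sqrt (1/16)" using that by (rule real_sqrt_le_mono)
      also have "sqrt (1/16::real) = 1/4" by (simp add: real_sqrt_divide)
      finally show ?thesis .
    qed
    have sq1: "sqrt a \<le> 1" if "a \<le> 1" for a :: real using that by simp
    have t1: "\<bar>bl p (\<lambda>i. u p i - U0 p i) (vr p)\<bar> \<le> 1/4 * on p" if "p \<in> Blk" for p
    proof -
      have "\<bar>bl p (\<lambda>i. u p i - U0 p i) (vr p)\<bar> \<le> sqrt (nrm2 (Ir p) (\<lambda>i. u p i - U0 p i)) * on p * sqrt (nrm2 (Jc p) (vr p))"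
        by (rule bl_bound[OF that])
      also have "\<dots> \<le> 1/4 * on p * 1"
        using sq4[OF duU[OF that]] sq1[of "nrm2 (Jc p) (vr p)"] nvr[OF that] nvrJ[OF that] on_nonneg[of p]
        by (intro mult_mono) auto
      finally show ?thesis by simp
    qed
    have t2: "\<bar>bl p (U0 p) (\<lambda>i. vr p i - V0 p i)\<bar> \<le> 1/4 * on p" if "p \<in> Blk" for p
    proof -
      have "\<bar>bl p (U0 p) (\<lambda>i. vr p i - V0 p i)\<bar> \<le> sqrt (nrm2 (Ir p) (U0 p)) * on p * sqrt (nrm2 (Jc p) (\<lambda>i. vr p i - V0 p i))"
        by (rule bl_bound[OF that])
      also have "\<dots> \<le> 1 * on p * (1/4)"
        using sq4[OF dvV[OF that]] sq1[OF nU0[OF that]] on_nonneg[of p]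
        by (intro mult_mono) auto
      finally show ?thesis by simp
    qed
    have t3: "\<bar>bl p (U0 p) (V0 p)\<bar> \<le> on p" if "p \<in> Blk" for p
    proof -
      have "\<bar>bl p (U0 p) (V0 p)\<bar> \<le> sqrt (nrm2 (Ir p) (U0 p)) * on p * sqrt (nrm2 (Jc p) (V0 p))"
        by (rule bl_bound[OF that])
      also have "\<dots> \<le> 1 * on p * 1"
        using sq1[OF nU0[OF that]] sq1[OF nV0[OF that]] on_nonneg[of p]
        by (intro mult_mono) auto
      finally show ?thesis by simp
    qed
    have decomp: "x p * bl p (u p) (vr p) - X0 p * bl p (U0 p) (V0 p) =
        x p * bl p (\<lambda>i. u p i - U0 p i) (vr p) + x p * bl p (U0 p) (\<lambda>i. vr p i - V0 p i)
        + (x p - X0 p) * bl p (U0 p) (V0 p)" for p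
      by (simp add: bl_diff1 bl_diff2 algebra_simps)
    have nxB: "nrm2 Blk x \<le> 1"
    proof -
      have "nrm2 Blk x = nrm2 Sset x" using Sset_sub finB by (intro nrm2_supp) (auto simp: x_def)
      thus ?thesis using nx by simp
    qed
    have nxX: "nrm2 Blk (\<lambda>p. x p - X0 p) \<le> 1/16"
    proof -
      have "nrm2 Blk (\<lambda>p. x p - X0 p) = nrm2 Sset (\<lambda>p. x p - X0 p)"
        using Sset_sub finB netpts_props(2)[OF X0(1)] by (intro nrm2_supp) (auto simp: x_def)
      thus ?thesis using X0 by simp
    qed
    have "q - Ff U0 V0 X0 = (\<Sum>p\<in>Blk. x p * bl p (u p) (vr p) - X0 p * bl p (U0 p) (V0 p))"
      unfolding Ffval[symmetric] Ff_def by (simp add: sum_subtractf)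
    also have "\<dots> = (\<Sum>p\<in>Blk. x p * bl p (\<lambda>i. u p i - U0 p i) (vr p)) + (\<Sum>p\<in>Blk. x p * bl p (U0 p) (\<lambda>i. vr p i - V0 p i))
        + (\<Sum>p\<in>Blk. (x p - X0 p) * bl p (U0 p) (V0 p))"
      unfolding decomp by (simp add: sum.distrib)
    also have "\<dots> \<le> (\<Sum>p\<in>Blk. \<bar>x p\<bar> * (1/4 * on p)) + (\<Sum>p\<in>Blk. \<bar>x p\<bar> * (1/4 * on p))
        + (\<Sum>p\<in>Blk. \<bar>x p - X0 p\<bar> * on p)"
    proof -
      have a: "x p * bl p (\<lambda>i. u p i - U0 p i) (vr p) \<le> \<bar>x p\<bar> * (1/4 * on p)" if "p \<in> Blk" for p
        using mult_mono[OF order_refl t1[OF that], of "\<bar>x p\<bar>"] abs_mult[of "x p"] abs_ge_self by (smt (verit))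
      have b: "x p * bl p (U0 p) (\<lambda>i. vr p i - V0 p i) \<le> \<bar>x p\<bar> * (1/4 * on p)" if "p \<in> Blk" for p
        using mult_mono[OF order_refl t2[OF that], of "\<bar>x p\<bar>"] abs_mult[of "x p"] abs_ge_self by (smt (verit))
      have c: "(x p - X0 p) * bl p (U0 p) (V0 p) \<le> \<bar>x p - X0 p\<bar> * on p" if "p \<in> Blk" for p
        using mult_mono[OF order_refl t3[OF that], of "\<bar>x p - X0 p\<bar>"] abs_mult[of "x p - X0 p"] abs_ge_self by (smt (verit))
      show ?thesis using a b c by (intro add_mono sum_mono) auto
    qed
    also have "\<dots> = 1/2 * (\<Sum>p\<in>Blk. \<bar>x p\<bar> * on p) + (\<Sum>p\<in>Blk. \<bar>x p - X0 p\<bar> * on p)"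
      by (simp add: sum_distrib_left algebra_simps flip: sum.distrib)
    also have "\<dots> \<le> 1/2 * (sqrt (nrm2 Blk x) * sqrt Nsum) + sqrt (nrm2 Blk (\<lambda>p. x p - X0 p)) * sqrt Nsum"
      using sum_abs_on[of x] sum_abs_on[of "\<lambda>p. x p - X0 p"] by simp
    also have "\<dots> \<le> 1/2 * (1 * sqrt Nsum) + 1/4 * sqrt Nsum"
      using sq1[OF nxB] sq4[OF nxX] N0 by (intro add_mono mult_left_mono mult_right_mono) auto
    finally have "q \<le> s + 3/4 * sqrt Nsum" using FfUs by simp
    hence "q\<^sup>2 \<le> (s + 3/4 * sqrt Nsum)\<^sup>2" using qp by (intro power_mono) auto
    moreover have "q\<^sup>2 = Q" unfolding q_def using Q0 by simp
    ultimately show ?thesis unfolding Q_def y_def by simp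
  qed
qed

lemma net_bound:
  assumes s: "\<forall>(U, V, X)\<in>nets. Ff U V X \<le> s"
  shows "Nsum \<le> 16 * s\<^sup>2"
proof -
  have s0: "s \<ge> 0" using s zero_in_nets Ff_zero by fastforce
  have N0: "Nsum \<ge> 0" unfolding Nsum_def by (auto intro: sum_nonneg)
  have "Nsum \<le> (s + 3/4 * sqrt Nsum)\<^sup>2"
    unfolding Nsum_def on_def
    by (rule sum_of_sups[OF finB]) (use step_a[OF s] in \<open>auto simp: Nsum_def on_def\<close>)
  hence "sqrt Nsum \<le> sqrt ((s + 3/4 * sqrt Nsum)\<^sup>2)" by (rule real_sqrt_le_mono)
  hence "sqrt Nsum \<le> s + 3/4 * sqrt Nsum" using s0 by simp
  hence "sqrt Nsum \<le> 4 * s" by simp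
  hence "(sqrt Nsum)\<^sup>2 \<le> (4 * s)\<^sup>2" using N0 by (intro power_mono) auto
  thus ?thesis using N0 by simp
qed

lemma PiE_card_bound:
  assumes "\<And>p. p \<in> Blk \<Longrightarrow> finite (T p) \<and> card (T p) \<le> 2^(10 * card (W p))"
  shows "finite (PiE Blk T) \<and> card (PiE Blk T) \<le> 2^(10 * (\<Sum>p\<in>Blk. card (W p)))"
proof -
  have f: "finite (PiE Blk T)" using finB assms by (intro finite_PiE) auto
  have "card (PiE Blk T) = (\<Prod>p\<in>Blk. card (T p))" by (rule card_PiE[OF finB])
  also have "\<dots> \<le> (\<Prod>p\<in>Blk. 2^(10 * card (W p)))" using assms by (intro prod_mono) auto
  also have "\<dots> = 2^(\<Sum>p\<in>Blk. 10 * card (W p))" by (simp add: power_sum)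
  also have "\<dots> = 2^(10 * (\<Sum>p\<in>Blk. card (W p)))" by (simp add: sum_distrib_left)
  finally show ?thesis using f by simp
qed

lemma nets_card:
  "finite nets \<and> card nets \<le> 2^(10 * ((\<Sum>p\<in>Blk. card (Rr p)) + (\<Sum>p\<in>Blk. card (Rc p)) + card Sset))"
proof -
  have fr: "finite (Rr p)" "finite (Rc p)" if "p \<in> Blk" for p
    using finI[OF that] RrI[OF that] finJ[OF that] RcJ[OF that] finite_subset by blast+
  have finS: "finite Sset" using Sset_sub finB finite_subset by blast
  have eq: "nets = PiE Blk (\<lambda>p. netpts (Rr p)) \<times> (PiE Blk (\<lambda>p. netpts (Rc p)) \<times> netpts Sset)"
    unfolding nets_def by auto
  have a: "finite (PiE Blk (\<lambda>p. netpts (Rr p))) \<and> card (PiE Blk (\<lambda>p. netpts (Rr p))) \<le> 2^(10 * (\<Sum>p\<in>Blk. card (Rr p)))"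
    by (rule PiE_card_bound, rule netpts_card, rule fr(1))
  have b: "finite (PiE Blk (\<lambda>p. netpts (Rc p))) \<and> card (PiE Blk (\<lambda>p. netpts (Rc p))) \<le> 2^(10 * (\<Sum>p\<in>Blk. card (Rc p)))"
    by (rule PiE_card_bound, rule netpts_card, rule fr(2))
  have c: "finite (netpts Sset) \<and> card (netpts Sset) \<le> 2^(10 * card Sset)" by (rule netpts_card[OF finS])
  have "card nets = card (PiE Blk (\<lambda>p. netpts (Rr p))) * (card (PiE Blk (\<lambda>p. netpts (Rc p))) * card (netpts Sset))"
    unfolding eq by (simp add: card_cartesian_product)
  also have "\<dots> \<le> 2^(10 * (\<Sum>p\<in>Blk. card (Rr p))) * (2^(10 * (\<Sum>p\<in>Blk. card (Rc p))) * 2^(10 * card Sset))"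
    using a b c by (intro mult_mono) auto
  also have "\<dots> = 2^(10 * ((\<Sum>p\<in>Blk. card (Rr p)) + (\<Sum>p\<in>Blk. card (Rc p)) + card Sset))"
    by (simp add: power_add[symmetric] algebra_simps)
  finally show ?thesis using a b c eq by simp
qed

lemma Sset_card: "card Sset \<le> (\<Sum>p\<in>Blk. card (Rr p))"
proof -
  have "card Sset = (\<Sum>p\<in>Sset. 1)" by simp
  also have "\<dots> \<le> (\<Sum>p\<in>Sset. card (Rr p))"
  proof (intro sum_mono)
    fix p assume p: "p \<in> Sset"
    hence "Rr p \<noteq> {}" "finite (Rr p)" using finI RrI finite_subset unfolding Sset_def by blast+
    thus "1 \<le> card (Rr p)" by (simp add: Suc_le_eq card_gt_0_iff)
  qed
  also have "\<dots> \<le> (\<Sum>p\<in>Blk. card (Rr p))" using Sset_sub finB by (intro sum_mono2) auto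
  finally show ?thesis .
qed

end

lemma hoeff_pi:
  fixes A :: "'e set" and q c :: "'e \<Rightarrow> real"
  assumes fA: "finite A" and q: "\<And>e. e \<in> A \<Longrightarrow> 0 \<le> q e \<and> q e \<le> 1"
    and s: "s > 0" and D: "(\<Sum>e\<in>A. (c e)\<^sup>2) \<le> D" "D > 0"
  shows "measure_pmf.prob (Pi_pmf A False (\<lambda>e. bernoulli_pmf (q e)))
           {\<omega>. s \<le> (\<Sum>e\<in>A. c e * ((if \<omega> e then 1 else 0) - q e))} \<le> exp (- 2 * s\<^sup>2 / D)"
proof (cases "(\<Sum>e\<in>A. (c e)\<^sup>2) = 0")
  case True
  hence "\<forall>e\<in>A. c e = 0" using fA by (simp add: sum_nonneg_eq_0_iff)
  hence "{\<omega>. s \<le> (\<Sum>e\<in>A. c e * ((if \<omega> e then 1 else 0) - q e))} = {}" using s by auto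
  thus ?thesis by simp
next
  case False
  define p where "p = Pi_pmf A False (\<lambda>e. bernoulli_pmf (q e))"
  define M where "M = measure_pmf p"
  define X where "X = (\<lambda>e (\<omega>::'e \<Rightarrow> bool). c e * (if \<omega> e then 1 else 0))"
  define a where "a = (\<lambda>e. min 0 (c e))"
  define b where "b = (\<lambda>e. max 0 (c e))"
  have ind0: "prob_space.indep_vars M (\<lambda>_. count_space UNIV) (\<lambda>x f. f x) A"
    unfolding M_def p_def by (rule indep_vars_Pi_pmf[OF fA])
  have ind: "prob_space.indep_vars M (\<lambda>_. borel) X A"
  proof -
    have "prob_space.indep_vars M (\<lambda>_. borel) (\<lambda>e \<omega>. (\<lambda>bb. c e * (if bb then 1 else 0)) ((\<lambda>x f. f x) e \<omega>)) A"
      by (rule prob_space.indep_vars_compose2[OF _ ind0]) (auto simp: M_def measure_pmf.prob_space_axioms)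
    thus ?thesis unfolding X_def by simp
  qed
  interpret H: Hoeffding_ineq M A X a b "\<Sum>e\<in>A. prob_space.expectation M (X e)"
  proof unfold_locales
    show "finite A" by (rule fA)
    show "prob_space.indep_vars M (\<lambda>_. borel) X A" by (rule ind)
    fix e assume "e \<in> A"
    show "AE x in M. X e x \<in> {a e..b e}" unfolding X_def a_def b_def by (auto intro!: AE_I2)
  qed (auto simp: M_def measure_pmf.prob_space_axioms intro!: exI[of _ "{UNIV}"])
  have EX: "prob_space.expectation M (X e) = c e * q e" if "e \<in> A" for e
  proof -
    have "prob_space.expectation M (X e) = measure_pmf.expectation (map_pmf (\<lambda>\<omega>. \<omega> e) p) (\<lambda>bb. c e * (if bb then 1 else 0))"
      unfolding M_def X_def by simp
    also have "map_pmf (\<lambda>\<omega>. \<omega> e) p = bernoulli_pmf (q e)"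
      unfolding p_def using Pi_pmf_component[OF fA, of e False "\<lambda>e. bernoulli_pmf (q e)"] that by simp
    also have "measure_pmf.expectation (bernoulli_pmf (q e)) (\<lambda>bb. c e * (if bb then 1 else 0)) = c e * q e"
      using q[OF that] by simp
    finally show ?thesis .
  qed
  have bma: "(b e - a e)\<^sup>2 = (c e)\<^sup>2" for e unfolding a_def b_def by (cases "c e \<ge> 0") auto
  have sumpos: "(\<Sum>e\<in>A. (b e - a e)\<^sup>2) > 0"
    unfolding bma using False by (simp add: less_le sum_nonneg)
  have h1: "H.prob {x\<in>space M. (\<Sum>e\<in>A. X e x) \<ge> (\<Sum>e\<in>A. H.expectation (X e)) + s} \<le>
      exp (-2 * s\<^sup>2 / (\<Sum>e\<in>A. (b e - a e)\<^sup>2))"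
    by (rule H.Hoeffding_ineq_ge) (use s sumpos in auto)
  moreover have h2: "{x\<in>space M. (\<Sum>e\<in>A. X e x) \<ge> (\<Sum>e\<in>A. H.expectation (X e)) + s} =
      {\<omega>. s \<le> (\<Sum>e\<in>A. c e * ((if \<omega> e then 1 else 0) - q e))}"
  proof -
    have "(\<Sum>e\<in>A. H.expectation (X e)) = (\<Sum>e\<in>A. c e * q e)" using EX by simp
    moreover have "(\<Sum>e\<in>A. c e * ((if \<omega> e then 1 else 0) - q e)) = (\<Sum>e\<in>A. X e \<omega>) - (\<Sum>e\<in>A. c e * q e)" for \<omega>
      unfolding X_def by (simp add: algebra_simps sum_subtractf)
    ultimately show ?thesis by (auto simp: M_def)
  qed
  moreover have h3: "exp (-2 * s\<^sup>2 / (\<Sum>e\<in>A. (b e - a e)\<^sup>2)) \<le> exp (- 2 * s\<^sup>2 / D)"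
  proof -
    have "2 * s\<^sup>2 / D \<le> 2 * s\<^sup>2 / (\<Sum>e\<in>A. (b e - a e)\<^sup>2)"
      unfolding bma using D sumpos[unfolded bma] s by (intro divide_left_mono) auto
    thus ?thesis by simp
  qed
  ultimately have "measure_pmf.prob p {\<omega>. s \<le> (\<Sum>e\<in>A. c e * ((if \<omega> e then 1 else 0) - q e))} \<le> exp (- 2 * s\<^sup>2 / D)"
    unfolding M_def by (metis (no_types, lifting) order_trans)
  thus ?thesis unfolding p_def .
qed

definition Edges :: "nat \<Rightarrow> (nat \<times> nat) set" where
  "Edges n = {(i, j). i \<le> j \<and> j < n}"

definition ind :: "bool \<Rightarrow> real" where "ind b = (if b then 1 else 0)"

definition cof :: "(nat \<Rightarrow> nat \<Rightarrow> real) \<Rightarrow> nat \<times> nat \<Rightarrow> real" where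
  "cof M e = (case e of (a, b) \<Rightarrow> if a = b then M a a else M a b + M b a)"

lemma finite_Edges: "finite (Edges n)"
proof -
  have "Edges n \<subseteq> {..<n} \<times> {..<n}" unfolding Edges_def by auto
  thus ?thesis by (rule finite_subset) auto
qed

lemma edge_pmf_eq: "edge_pmf n P = Pi_pmf (Edges n) False (\<lambda>e. bernoulli_pmf (case e of (i, j) \<Rightarrow> P i j))"
  unfolding edge_pmf_def Edges_def by (intro arg_cong[where f = "Pi_pmf _ False"]) (auto simp: fun_eq_iff)

lemma fiber_sum:
  "(\<Sum>i<n. \<Sum>j<n. h i j) = (\<Sum>e\<in>Edges n. case e of (a, b) \<Rightarrow> if a = b then h a a else h a b + h b a)"
proof -
  define Sq where "Sq = {..<n} \<times> {..<(n::nat)}"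
  define g where "g = (\<lambda>(i::nat, j::nat). (min i j, max i j))"
  have "(\<Sum>i<n. \<Sum>j<n. h i j) = (\<Sum>x\<in>Sq. case x of (i, j) \<Rightarrow> h i j)"
    unfolding Sq_def by (simp add: sum.cartesian_product)
  also have "\<dots> = (\<Sum>y\<in>Edges n. \<Sum>x\<in>{x\<in>Sq. g x = y}. case x of (i, j) \<Rightarrow> h i j)"
    by (rule sum.group[symmetric]) (use finite_Edges in \<open>auto simp: Sq_def g_def Edges_def\<close>)
  also have "\<dots> = (\<Sum>e\<in>Edges n. case e of (a, b) \<Rightarrow> if a = b then h a a else h a b + h b a)"
  proof (intro sum.cong refl)
    fix e assume e: "e \<in> Edges n"
    obtain a b where ab: "e = (a, b)" "a \<le> b" "b < n" using e unfolding Edges_def by auto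
    show "(\<Sum>x\<in>{x\<in>Sq. g x = e}. case x of (i, j) \<Rightarrow> h i j) = (case e of (a, b) \<Rightarrow> if a = b then h a a else h a b + h b a)"
    proof (cases "a = b")
      case True
      have "{x\<in>Sq. g x = e} = {(a, a)}" using ab True unfolding Sq_def g_def by (auto simp: min_def max_def split: if_splits)
      thus ?thesis using ab True by simp
    next
      case False
      have "{x\<in>Sq. g x = e} = {(a, b), (b, a)}" using ab False unfolding Sq_def g_def
        by (auto simp: min_def max_def split: if_splits)
      thus ?thesis using ab False by simp
    qed
  qed
  finally show ?thesis .
qed

lemma edge_sum:
  assumes sym: "\<forall>i<n. \<forall>j<n. P i j = P j i"
  shows "(\<Sum>i<n. \<Sum>j<n. M i j * (adj n \<omega> i j - P i j)) =
         (\<Sum>e\<in>Edges n. cof M e * (ind (\<omega> e) - (case e of (a, b) \<Rightarrow> P a b)))"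
proof -
  have "(\<Sum>i<n. \<Sum>j<n. M i j * (adj n \<omega> i j - P i j)) =
     (\<Sum>e\<in>Edges n. case e of (a, b) \<Rightarrow> if a = b then M a a * (adj n \<omega> a a - P a a)
        else M a b * (adj n \<omega> a b - P a b) + M b a * (adj n \<omega> b a - P b a))"
    by (rule fiber_sum)
  also have "\<dots> = (\<Sum>e\<in>Edges n. cof M e * (ind (\<omega> e) - (case e of (a, b) \<Rightarrow> P a b)))"
  proof (intro sum.cong refl)
    fix e assume e: "e \<in> Edges n"
    obtain a b where ab: "e = (a, b)" "a \<le> b" "b < n" using e unfolding Edges_def by auto
    have "adj n \<omega> a b = ind (\<omega> (a, b))" "adj n \<omega> b a = ind (\<omega> (a, b))"
      using ab unfolding adj_def ind_def by (auto simp: min_def max_def)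
    moreover have "P b a = P a b" using sym ab by auto
    ultimately show "(case e of (a, b) \<Rightarrow> if a = b then M a a * (adj n \<omega> a a - P a a)
        else M a b * (adj n \<omega> a b - P a b) + M b a * (adj n \<omega> b a - P b a)) =
        cof M e * (ind (\<omega> e) - (case e of (a, b) \<Rightarrow> P a b))"
      using ab unfolding cof_def by (auto simp: algebra_simps)
  qed
  finally show ?thesis .
qed

lemma cof_sq: "(\<Sum>e\<in>Edges n. (cof M e)\<^sup>2) \<le> 2 * (\<Sum>i<n. \<Sum>j<n. (M i j)\<^sup>2)"
proof -
  have "(\<Sum>e\<in>Edges n. (cof M e)\<^sup>2) \<le>
      (\<Sum>e\<in>Edges n. 2 * (case e of (a, b) \<Rightarrow> if a = b then (M a a)\<^sup>2 else (M a b)\<^sup>2 + (M b a)\<^sup>2))"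
  proof (intro sum_mono)
    fix e :: "nat \<times> nat"
    obtain a b where ab: "e = (a, b)" by force
    have "(M a b + M b a)\<^sup>2 \<le> 2 * ((M a b)\<^sup>2 + (M b a)\<^sup>2)"
      using sum_squares_ge_zero[of "M a b - M b a" 0] by (simp add: power2_eq_square algebra_simps)
    thus "(cof M e)\<^sup>2 \<le> 2 * (case e of (a, b) \<Rightarrow> if a = b then (M a a)\<^sup>2 else (M a b)\<^sup>2 + (M b a)\<^sup>2)"
      unfolding ab cof_def by auto
  qed
  also have "\<dots> = 2 * (\<Sum>i<n. \<Sum>j<n. (M i j)\<^sup>2)"
    by (simp add: fiber_sum[of "\<lambda>i j. (M i j)\<^sup>2"] sum_distrib_left)
  finally show ?thesis .
qed

lemma support_adj:
  assumes "\<omega> \<in> set_pmf (edge_pmf n P)" "i < n" "j < n" "P i j = 0"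
    and sym: "\<forall>i<n. \<forall>j<n. P i j = P j i"
  shows "adj n \<omega> i j = 0"
proof -
  define e where "e = (min i j, max i j)"
  have eE: "e \<in> Edges n" unfolding e_def Edges_def using assms by auto
  have Pe: "(case e of (a, b) \<Rightarrow> P a b) = 0" using assms sym unfolding e_def by (auto simp: min_def max_def)
  have "\<omega> \<in> set_pmf (Pi_pmf (Edges n) False (\<lambda>e. bernoulli_pmf (case e of (i, j) \<Rightarrow> P i j)))"
    using assms(1) by (simp add: edge_pmf_eq)
  hence "\<omega> e \<in> set_pmf (bernoulli_pmf (case e of (i, j) \<Rightarrow> P i j))"
    using eE unfolding e_def by (auto simp: set_Pi_pmf[OF finite_Edges] PiE_dflt_def)
  hence "\<omega> e \<in> set_pmf (bernoulli_pmf 0)" using Pe by simp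
  hence "pmf (bernoulli_pmf 0) (\<omega> e) \<noteq> 0" by (simp add: set_pmf_iff)
  hence "\<not> \<omega> e" using pmf_bernoulli_True[of 0] by (cases "\<omega> e") auto
  thus ?thesis unfolding adj_def e_def by simp
qed

lemma finite_comm: "finite (comm n z k)" unfolding comm_def by auto

lemma comm_sub: "comm n z k \<subseteq> {..<n}" unfolding comm_def by auto

lemma lab_range: "z \<in> labelings n K \<Longrightarrow> i < n \<Longrightarrow> z i < K"
  unfolding labelings_def by (auto simp: PiE_iff)

lemma partition_sum:
  assumes "z \<in> labelings n K"
  shows "(\<Sum>k<K. \<Sum>i\<in>comm n z k. h k i) = (\<Sum>i<n. h (z i) i)"
proof -
  have "(\<Sum>i<n. h (z i) i) = (\<Sum>k<K. \<Sum>i\<in>{i\<in>{..<n}. z i = k}. h (z i) i)"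
    by (rule sum.group[symmetric]) (use lab_range[OF assms] in auto)
  also have "\<dots> = (\<Sum>k<K. \<Sum>i\<in>comm n z k. h k i)"
    unfolding comm_def by (intro sum.cong refl) auto
  finally show ?thesis by simp
qed

lemma partition_sum2:
  assumes "z \<in> labelings n K"
  shows "(\<Sum>k<K. \<Sum>l<K. \<Sum>i\<in>comm n z k. \<Sum>j\<in>comm n z l. f k l i j) = (\<Sum>i<n. \<Sum>j<n. f (z i) (z j) i j)"
proof -
  have "(\<Sum>k<K. \<Sum>l<K. \<Sum>i\<in>comm n z k. \<Sum>j\<in>comm n z l. f k l i j) =
        (\<Sum>k<K. \<Sum>i\<in>comm n z k. \<Sum>l<K. \<Sum>j\<in>comm n z l. f k l i j)"
  proof -
    have "\<And>k. (\<Sum>l<K. \<Sum>i\<in>comm n z k. \<Sum>j\<in>comm n z l. f k l i j) = (\<Sum>i\<in>comm n z k. \<Sum>l<K. \<Sum>j\<in>comm n z l. f k l i j)"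
      by (rule sum.swap)
    thus ?thesis by simp
  qed
  also have "\<dots> = (\<Sum>i<n. \<Sum>l<K. \<Sum>j\<in>comm n z l. f (z i) l i j)"
    by (rule partition_sum[OF assms])
  also have "\<dots> = (\<Sum>i<n. \<Sum>j<n. f (z i) (z j) i j)"
  proof -
    have "\<And>i. (\<Sum>l<K. \<Sum>j\<in>comm n z l. f (z i) l i j) = (\<Sum>j<n. f (z i) (z j) i j)"
      by (rule partition_sum[OF assms])
    thus ?thesis by simp
  qed
  finally show ?thesis .
qed

lemma frob2_partition:
  assumes "z \<in> labelings n K"
  shows "(\<Sum>k<K. \<Sum>l<K. frob2 (comm n z k) (comm n z l) M) = frob2 {..<n} {..<n} M"
  unfolding frob2_def using partition_sum2[OF assms, of "\<lambda>k l i j. (M i j)\<^sup>2"] by simp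

lemma G1_bound:
  assumes sym: "\<forall>i<n. \<forall>j<n. P i j = P j i" and P01: "\<forall>i<n. \<forall>j<n. 0 \<le> P i j \<and> P i j \<le> 1"
    and t: "t > 0"
  shows "measure_pmf.prob (edge_pmf n P)
     {\<omega>. (\<Sum>i<n. \<Sum>j<n. P i j * (adj n \<omega> i j - P i j)) < - sqrt (frob2 {..<n} {..<n} P * t)} \<le> exp (- t)"
proof -
  define FP where "FP = frob2 {..<n} {..<n} P"
  have FP0: "FP \<ge> 0" unfolding FP_def by (rule frob2_nonneg)
  show ?thesis
  proof (cases "FP = 0")
    case True
    hence "\<forall>i<n. \<forall>j<n. P i j = 0" unfolding FP_def frob2_def
      using sum_nonneg_eq_0_iff[of "{..<n}" "\<lambda>i. \<Sum>j<n. (P i j)\<^sup>2"]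
        sum_nonneg_eq_0_iff[of "{..<n}" "\<lambda>j. (P _ j)\<^sup>2"]
      by (simp add: sum_nonneg)
    hence "{\<omega>. (\<Sum>i<n. \<Sum>j<n. P i j * (adj n \<omega> i j - P i j)) < - sqrt (frob2 {..<n} {..<n} P * t)} = {}"
      using True unfolding FP_def by auto
    thus ?thesis by simp
  next
    case False
    hence FPp: "FP > 0" using FP0 by simp
    define s where "s = sqrt (FP * t)"
    have sp: "s > 0" unfolding s_def using FPp t by simp
    define q where "q = (\<lambda>e. case e of (a, b) \<Rightarrow> P a b)"
    have q01: "0 \<le> q e \<and> q e \<le> 1" if "e \<in> Edges n" for e
      using that P01 unfolding q_def Edges_def by auto
    have sub: "{\<omega>. (\<Sum>i<n. \<Sum>j<n. P i j * (adj n \<omega> i j - P i j)) < - sqrt (frob2 {..<n} {..<n} P * t)}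
        \<subseteq> {\<omega>. s \<le> (\<Sum>e\<in>Edges n. (- cof P e) * (ind (\<omega> e) - q e))}"
    proof
      fix \<omega> assume "\<omega> \<in> {\<omega>. (\<Sum>i<n. \<Sum>j<n. P i j * (adj n \<omega> i j - P i j)) < - sqrt (frob2 {..<n} {..<n} P * t)}"
      hence a: "(\<Sum>e\<in>Edges n. cof P e * (ind (\<omega> e) - q e)) < - s"
        unfolding edge_sum[OF sym] s_def FP_def q_def by simp
      have "(\<Sum>e\<in>Edges n. (- cof P e) * (ind (\<omega> e) - q e)) = - (\<Sum>e\<in>Edges n. cof P e * (ind (\<omega> e) - q e))"
        by (simp add: sum_negf)
      thus "\<omega> \<in> {\<omega>. s \<le> (\<Sum>e\<in>Edges n. (- cof P e) * (ind (\<omega> e) - q e))}" using a by simp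
    qed
    have D: "(\<Sum>e\<in>Edges n. (- cof P e)\<^sup>2) \<le> 2 * FP"
      using cof_sq[of P n] unfolding FP_def frob2_def by simp
    have "measure_pmf.prob (Pi_pmf (Edges n) False (\<lambda>e. bernoulli_pmf (q e)))
           {\<omega>. s \<le> (\<Sum>e\<in>Edges n. (- cof P e) * ((if \<omega> e then 1 else 0) - q e))} \<le> exp (- 2 * s\<^sup>2 / (2 * FP))"
      by (rule hoeff_pi[OF finite_Edges q01 sp D]) (use FPp in auto)
    moreover have "exp (- 2 * s\<^sup>2 / (2 * FP)) = exp (- t)" unfolding s_def using FPp t by simp
    moreover have "edge_pmf n P = Pi_pmf (Edges n) False (\<lambda>e. bernoulli_pmf (q e))"
      unfolding q_def by (rule edge_pmf_eq)
    ultimately have "measure_pmf.prob (edge_pmf n P) {\<omega>. s \<le> (\<Sum>e\<in>Edges n. (- cof P e) * (ind (\<omega> e) - q e))} \<le> exp (- t)"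
      unfolding ind_def by simp
    moreover have "measure_pmf.prob (edge_pmf n P) {\<omega>. (\<Sum>i<n. \<Sum>j<n. P i j * (adj n \<omega> i j - P i j))
          < - sqrt (frob2 {..<n} {..<n} P * t)} \<le> measure_pmf.prob (edge_pmf n P) {\<omega>. s \<le> (\<Sum>e\<in>Edges n. (- cof P e) * (ind (\<omega> e) - q e))}"
      by (rule measure_pmf.finite_measure_mono[OF sub]) simp
    ultimately show ?thesis by linarith
  qed
qed

definition BlkK :: "nat \<Rightarrow> (nat \<times> nat) set" where "BlkK K = {..<K} \<times> {..<K}"
definition IrZ :: "nat \<Rightarrow> (nat \<Rightarrow> nat) \<Rightarrow> nat \<times> nat \<Rightarrow> nat set" where "IrZ n z p = comm n z (fst p)"
definition JcZ :: "nat \<Rightarrow> (nat \<Rightarrow> nat) \<Rightarrow> nat \<times> nat \<Rightarrow> nat set" where "JcZ n z p = comm n z (snd p)"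
definition RrZ :: "nat \<Rightarrow> (nat \<Rightarrow> nat \<Rightarrow> real) \<Rightarrow> (nat \<Rightarrow> nat) \<Rightarrow> nat \<times> nat \<Rightarrow> nat set" where
  "RrZ n P z p = {i \<in> comm n z (fst p). \<exists>j \<in> comm n z (snd p). P i j \<noteq> 0}"
definition RcZ :: "nat \<Rightarrow> (nat \<Rightarrow> nat \<Rightarrow> real) \<Rightarrow> (nat \<Rightarrow> nat) \<Rightarrow> nat \<times> nat \<Rightarrow> nat set" where
  "RcZ n P z p = RrZ n P z (snd p, fst p)"
definition Eom :: "nat \<Rightarrow> (nat \<Rightarrow> nat \<Rightarrow> real) \<Rightarrow> (nat \<times> nat \<Rightarrow> bool) \<Rightarrow> nat \<Rightarrow> nat \<Rightarrow> real" where
  "Eom n P \<omega> = (\<lambda>i j. adj n \<omega> i j - P i j)"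
definition sZ :: "nat \<Rightarrow> nat \<Rightarrow> (nat \<Rightarrow> nat \<Rightarrow> real) \<Rightarrow> real \<Rightarrow> (nat \<Rightarrow> nat) \<Rightarrow> real" where
  "sZ n K P t z = sqrt (30 * real (breve_card n K P z) * ln 2 + real n * ln (real K) + t)"

lemma blocks_gen:
  assumes "\<And>p i j. p \<in> BlkK K \<Longrightarrow> i \<in> IrZ n z p \<Longrightarrow> j \<in> JcZ n z p \<Longrightarrow> E i j \<noteq> 0 \<Longrightarrow>
              i \<in> RrZ n P z p \<and> j \<in> RcZ n P z p"
  shows "blocks (BlkK K) (IrZ n z) (JcZ n z) (RrZ n P z) (RcZ n P z) E"
proof
  show "finite (BlkK K)" unfolding BlkK_def by simp
  fix p assume p: "p \<in> BlkK K"
  show "finite (IrZ n z p)" unfolding IrZ_def by (rule finite_comm)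
  show "finite (JcZ n z p)" unfolding JcZ_def by (rule finite_comm)
  show "RrZ n P z p \<subseteq> IrZ n z p" unfolding RrZ_def IrZ_def by auto
  show "RcZ n P z p \<subseteq> JcZ n z p" unfolding RcZ_def RrZ_def JcZ_def by auto
  fix i j assume "i \<in> IrZ n z p" "j \<in> JcZ n z p" "E i j \<noteq> 0"
  thus "i \<in> RrZ n P z p \<and> j \<in> RcZ n P z p" using assms p by blast
qed

lemma blocks_zero: "blocks (BlkK K) (IrZ n z) (JcZ n z) (RrZ n P z) (RcZ n P z) (\<lambda>_ _. 0)"
  by (rule blocks_gen) simp

lemma blocks_omega:
  assumes "\<omega> \<in> set_pmf (edge_pmf n P)" and sym: "\<forall>i<n. \<forall>j<n. P i j = P j i"
  shows "blocks (BlkK K) (IrZ n z) (JcZ n z) (RrZ n P z) (RcZ n P z) (Eom n P \<omega>)"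
proof (rule blocks_gen)
  fix p i j assume p: "p \<in> BlkK K" and i: "i \<in> IrZ n z p" and j: "j \<in> JcZ n z p" and E: "Eom n P \<omega> i j \<noteq> 0"
  have ic: "i \<in> comm n z (fst p)" and jc: "j \<in> comm n z (snd p)" using i j unfolding IrZ_def JcZ_def by auto
  have "i < n" "j < n" using ic jc comm_sub by auto
  have pij: "P i j \<noteq> 0"
  proof
    assume "P i j = 0"
    hence "adj n \<omega> i j = 0" using support_adj[OF assms(1) \<open>i < n\<close> \<open>j < n\<close> _ sym] by blast
    thus False using E \<open>P i j = 0\<close> unfolding Eom_def by simp
  qed
  have pji: "P j i \<noteq> 0" using sym \<open>i < n\<close> \<open>j < n\<close> pij by auto
  have "\<exists>i'\<in>comm n z (fst p). P j i' \<noteq> 0" using ic pji by blast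
  moreover have "\<exists>j'\<in>comm n z (snd p). P i j' \<noteq> 0" using jc pij by blast
  ultimately show "i \<in> RrZ n P z p \<and> j \<in> RcZ n P z p" unfolding RrZ_def RcZ_def using ic jc by simp
qed

lemma sum_BlkK: "(\<Sum>p\<in>BlkK K. f p) = (\<Sum>k<K. \<Sum>l<K. f (k, l))"
proof -
  have "(\<Sum>k<K. \<Sum>l<K. f (k, l)) = (\<Sum>(k, l)\<in>{..<K} \<times> {..<K}. f (k, l))" by (rule sum.cartesian_product)
  also have "\<dots> = (\<Sum>p\<in>BlkK K. f p)" unfolding BlkK_def by (simp add: case_prod_beta)
  finally show ?thesis by simp
qed

lemma breve_Rr: "(\<Sum>p\<in>BlkK K. card (RrZ n P z p)) = breve_card n K P z"
  unfolding sum_BlkK breve_card_def RrZ_def by simp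

lemma breve_Rc: "(\<Sum>p\<in>BlkK K. card (RcZ n P z p)) = breve_card n K P z"
proof -
  have "(\<Sum>p\<in>BlkK K. card (RcZ n P z p)) = (\<Sum>k<K. \<Sum>l<K. card (RrZ n P z (l, k)))"
    unfolding sum_BlkK RcZ_def by simp
  also have "\<dots> = (\<Sum>l<K. \<Sum>k<K. card (RrZ n P z (l, k)))" by (rule sum.swap)
  also have "\<dots> = breve_card n K P z" unfolding breve_card_def RrZ_def by simp
  finally show ?thesis .
qed

lemma nets_card_Z:
  "finite (blocks.nets (BlkK K) (RrZ n P z) (RcZ n P z)) \<and>
   card (blocks.nets (BlkK K) (RrZ n P z) (RcZ n P z)) \<le> 2^(30 * breve_card n K P z)"
proof -
  interpret B: blocks "BlkK K" "IrZ n z" "JcZ n z" "RrZ n P z" "RcZ n P z" "\<lambda>_ _. 0"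
    by (rule blocks_zero)
  have "finite B.nets \<and> card B.nets \<le> 2^(10 * ((\<Sum>p\<in>BlkK K. card (RrZ n P z p)) + (\<Sum>p\<in>BlkK K. card (RcZ n P z p)) + card B.Sset))"
    by (rule B.nets_card)
  moreover have "card B.Sset \<le> breve_card n K P z" using B.Sset_card breve_Rr by simp
  moreover have "(2::nat)^(10 * (breve_card n K P z + breve_card n K P z + card B.Sset)) \<le> 2^(30 * breve_card n K P z)"
    using \<open>card B.Sset \<le> breve_card n K P z\<close> by (intro power_increasing) auto
  ultimately show ?thesis unfolding breve_Rr breve_Rc by (meson order_trans)
qed

definition MT :: "(nat \<Rightarrow> nat) \<Rightarrow> (nat \<times> nat \<Rightarrow> nat \<Rightarrow> real) \<Rightarrow> (nat \<times> nat \<Rightarrow> nat \<Rightarrow> real) \<Rightarrow> (nat \<times> nat \<Rightarrow> real)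
   \<Rightarrow> nat \<Rightarrow> nat \<Rightarrow> real" where
  "MT z U V X i j = X (z i, z j) * U (z i, z j) i * V (z i, z j) j"

definition FfZ :: "nat \<Rightarrow> nat \<Rightarrow> (nat \<Rightarrow> nat) \<Rightarrow> (nat \<Rightarrow> nat \<Rightarrow> real) \<Rightarrow> (nat \<times> nat \<Rightarrow> nat \<Rightarrow> real)
   \<Rightarrow> (nat \<times> nat \<Rightarrow> nat \<Rightarrow> real) \<Rightarrow> (nat \<times> nat \<Rightarrow> real) \<Rightarrow> real" where
  "FfZ n K z E U V X = (\<Sum>p\<in>BlkK K. X p * (\<Sum>i\<in>IrZ n z p. U p i * mv (JcZ n z p) E (V p) i))"

lemma Ff_as_sum:
  assumes "z \<in> labelings n K"
  shows "FfZ n K z E U V X = (\<Sum>i<n. \<Sum>j<n. MT z U V X i j * E i j)"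
proof -
  have "FfZ n K z E U V X =
      (\<Sum>k<K. \<Sum>l<K. \<Sum>i\<in>comm n z k. \<Sum>j\<in>comm n z l. X (k, l) * U (k, l) i * V (k, l) j * E i j)"
    unfolding FfZ_def mv_def sum_BlkK IrZ_def JcZ_def
    by (simp add: sum_distrib_left algebra_simps)
  also have "\<dots> = (\<Sum>i<n. \<Sum>j<n. MT z U V X i j * E i j)"
    unfolding MT_def by (rule partition_sum2[OF assms])
  finally show ?thesis .
qed

lemma MT_sq:
  assumes z: "z \<in> labelings n K" and T: "(U, V, X) \<in> blocks.nets (BlkK K) (RrZ n P z) (RcZ n P z)"
  shows "(\<Sum>i<n. \<Sum>j<n. (MT z U V X i j)\<^sup>2) \<le> 1"
proof -
  interpret B: blocks "BlkK K" "IrZ n z" "JcZ n z" "RrZ n P z" "RcZ n P z" "\<lambda>_ _. 0"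
    by (rule blocks_zero)
  have T': "U \<in> PiE (BlkK K) (\<lambda>p. netpts (RrZ n P z p))" "V \<in> PiE (BlkK K) (\<lambda>p. netpts (RcZ n P z p))"
    "X \<in> netpts B.Sset" using T unfolding B.nets_def by auto
  have nU: "nrm2 (comm n z k) (U (k, l)) \<le> 1" if "k < K" "l < K" for k l
  proof -
    have p: "(k, l) \<in> BlkK K" using that unfolding BlkK_def by auto
    have w: "U (k, l) \<in> netpts (RrZ n P z (k, l))" using T'(1) p by auto
    have "nrm2 (comm n z k) (U (k, l)) = nrm2 (RrZ n P z (k, l)) (U (k, l))"
      using netpts_props(2)[OF w] finite_comm by (intro nrm2_supp) (auto simp: RrZ_def)
    thus ?thesis using netpts_props(1)[OF w] by simp
  qed
  have nV: "nrm2 (comm n z l) (V (k, l)) \<le> 1" if "k < K" "l < K" for k l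
  proof -
    have p: "(k, l) \<in> BlkK K" using that unfolding BlkK_def by auto
    have w: "V (k, l) \<in> netpts (RcZ n P z (k, l))" using T'(2) p by auto
    have "nrm2 (comm n z l) (V (k, l)) = nrm2 (RcZ n P z (k, l)) (V (k, l))"
      using netpts_props(2)[OF w] finite_comm by (intro nrm2_supp) (auto simp: RcZ_def RrZ_def)
    thus ?thesis using netpts_props(1)[OF w] by simp
  qed
  have nX: "nrm2 (BlkK K) X \<le> 1"
  proof -
    have "nrm2 (BlkK K) X = nrm2 B.Sset X"
      using netpts_props(2)[OF T'(3)] B.Sset_sub B.finB by (intro nrm2_supp) auto
    thus ?thesis using netpts_props(1)[OF T'(3)] by simp
  qed
  have "(\<Sum>i<n. \<Sum>j<n. (MT z U V X i j)\<^sup>2) =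
      (\<Sum>k<K. \<Sum>l<K. \<Sum>i\<in>comm n z k. \<Sum>j\<in>comm n z l. (X (k, l) * U (k, l) i * V (k, l) j)\<^sup>2)"
    unfolding MT_def by (rule partition_sum2[OF z, symmetric])
  also have "\<dots> = (\<Sum>k<K. \<Sum>l<K. (X (k, l))\<^sup>2 * nrm2 (comm n z k) (U (k, l)) * nrm2 (comm n z l) (V (k, l)))"
    unfolding nrm2_def by (simp add: sum_distrib_left sum_distrib_right power_mult_distrib algebra_simps)
  also have "\<dots> \<le> (\<Sum>k<K. \<Sum>l<K. (X (k, l))\<^sup>2 * 1 * 1)"
    using nU nV by (intro sum_mono mult_mono) auto
  also have "\<dots> = nrm2 (BlkK K) X" unfolding nrm2_def sum_BlkK by simp
  finally show ?thesis using nX by simp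
qed

lemma single_bound:
  assumes z: "z \<in> labelings n K" and T: "(U, V, X) \<in> blocks.nets (BlkK K) (RrZ n P z) (RcZ n P z)"
    and sym: "\<forall>i<n. \<forall>j<n. P i j = P j i" and P01: "\<forall>i<n. \<forall>j<n. 0 \<le> P i j \<and> P i j \<le> 1"
    and s: "s > 0"
  shows "measure_pmf.prob (edge_pmf n P)
     {\<omega>. s \<le> FfZ n K z (Eom n P \<omega>) U V X} \<le> exp (- s\<^sup>2)"
proof -
  define q where "q = (\<lambda>e. case e of (a, b) \<Rightarrow> P a b)"
  have q01: "0 \<le> q e \<and> q e \<le> 1" if "e \<in> Edges n" for e
    using that P01 unfolding q_def Edges_def by auto
  define M where "M = MT z U V X"
  have eq: "FfZ n K z (Eom n P \<omega>) U V X =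
      (\<Sum>e\<in>Edges n. cof M e * ((if \<omega> e then 1 else 0) - q e))" for \<omega>
    unfolding Ff_as_sum[OF z] Eom_def M_def[symmetric] edge_sum[OF sym] q_def ind_def ..
  have D: "(\<Sum>e\<in>Edges n. (cof M e)\<^sup>2) \<le> 2"
    using cof_sq[of M n] MT_sq[OF z T] unfolding M_def by simp
  have "measure_pmf.prob (Pi_pmf (Edges n) False (\<lambda>e. bernoulli_pmf (q e)))
           {\<omega>. s \<le> (\<Sum>e\<in>Edges n. cof M e * ((if \<omega> e then 1 else 0) - q e))} \<le> exp (- 2 * s\<^sup>2 / 2)"
    by (rule hoeff_pi[OF finite_Edges q01 s D]) auto
  moreover have "edge_pmf n P = Pi_pmf (Edges n) False (\<lambda>e. bernoulli_pmf (q e))"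
    unfolding q_def by (rule edge_pmf_eq)
  ultimately show ?thesis unfolding eq by simp
qed

lemma card_labelings: "finite (labelings n K) \<and> card (labelings n K) \<le> K ^ n"
proof -
  have sub: "labelings n K \<subseteq> {..<n} \<rightarrow>\<^sub>E {..<K}" unfolding labelings_def by auto
  have f: "finite ({..<n} \<rightarrow>\<^sub>E {..<K})" by (intro finite_PiE) auto
  have "card (labelings n K) \<le> card ({..<n} \<rightarrow>\<^sub>E {..<K})" by (rule card_mono[OF f sub])
  also have "\<dots> = K ^ n" by (simp add: card_PiE)
  finally show ?thesis using f sub finite_subset by blast
qed

lemma G2_bound:
  assumes K1: "K \<ge> 1" and t: "t > 0"
    and sym: "\<forall>i<n. \<forall>j<n. P i j = P j i" and P01: "\<forall>i<n. \<forall>j<n. 0 \<le> P i j \<and> P i j \<le> 1"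
  shows "measure_pmf.prob (edge_pmf n P)
    (\<Union>z\<in>labelings n K. \<Union>T\<in>blocks.nets (BlkK K) (RrZ n P z) (RcZ n P z).
       {\<omega>. sZ n K P t z \<le> FfZ n K z (Eom n P \<omega>) (fst T) (fst (snd T)) (snd (snd T))})
     \<le> exp (- t)"
proof -
  let ?N = "\<lambda>z. blocks.nets (BlkK K) (RrZ n P z) (RcZ n P z)"
  let ?A = "\<lambda>z T. {\<omega>. sZ n K P t z \<le> FfZ n K z (Eom n P \<omega>) (fst T) (fst (snd T)) (snd (snd T))}"
  have lnK: "ln (real K) \<ge> 0" using K1 by simp
  have s2: "(sZ n K P t z)\<^sup>2 = 30 * real (breve_card n K P z) * ln 2 + real n * ln (real K) + t" for z
    unfolding sZ_def using lnK t by (intro real_sqrt_pow2) (auto intro!: add_nonneg_nonneg)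
  have sp: "sZ n K P t z > 0" for z unfolding sZ_def using lnK t by (intro real_sqrt_gt_zero) (auto intro!: add_nonneg_pos)
  have each: "measure_pmf.prob (edge_pmf n P) (?A z T) \<le> exp (- (sZ n K P t z)\<^sup>2)"
    if "z \<in> labelings n K" "T \<in> ?N z" for z T
  proof -
    obtain U V X where T: "T = (U, V, X)" by (cases T) auto
    show ?thesis using single_bound[OF that(1) that(2)[unfolded T] sym P01 sp] unfolding T by simp
  qed
  have inner: "measure_pmf.prob (edge_pmf n P) (\<Union>T\<in>?N z. ?A z T) \<le> exp (- real n * ln (real K) - t)"
    if z: "z \<in> labelings n K" for z
  proof -
    define b where "b = breve_card n K P z"
    have fN: "finite (?N z)" and cN: "card (?N z) \<le> 2^(30 * b)" using nets_card_Z unfolding b_def by auto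
    have "measure_pmf.prob (edge_pmf n P) (\<Union>T\<in>?N z. ?A z T) \<le> (\<Sum>T\<in>?N z. measure_pmf.prob (edge_pmf n P) (?A z T))"
      by (rule measure_UNION_le[OF fN]) simp
    also have "\<dots> \<le> (\<Sum>T\<in>?N z. exp (- (sZ n K P t z)\<^sup>2))" using each[OF z] by (intro sum_mono) auto
    also have "\<dots> = real (card (?N z)) * exp (- (sZ n K P t z)\<^sup>2)" by simp
    also have "\<dots> \<le> real (2^(30 * b)) * exp (- (sZ n K P t z)\<^sup>2)"
      using cN by (intro mult_right_mono) (simp_all only: of_nat_le_iff exp_ge_zero)
    also have "real (2^(30 * b)) = exp (real (30 * b) * ln 2)"
      by (subst exp_of_nat_mult) simp
    also have "exp (real (30 * b) * ln 2) * exp (- (sZ n K P t z)\<^sup>2) = exp (- real n * ln (real K) - t)"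
      unfolding s2 b_def[symmetric] by (simp add: exp_add[symmetric] algebra_simps)
    finally show ?thesis .
  qed
  have fL: "finite (labelings n K)" and cL: "card (labelings n K) \<le> K ^ n" using card_labelings by auto
  have "measure_pmf.prob (edge_pmf n P) (\<Union>z\<in>labelings n K. \<Union>T\<in>?N z. ?A z T)
      \<le> (\<Sum>z\<in>labelings n K. measure_pmf.prob (edge_pmf n P) (\<Union>T\<in>?N z. ?A z T))"
    by (rule measure_UNION_le[OF fL]) simp
  also have "\<dots> \<le> (\<Sum>z\<in>labelings n K. exp (- real n * ln (real K) - t))" using inner by (intro sum_mono) auto
  also have "\<dots> = real (card (labelings n K)) * exp (- real n * ln (real K) - t)" by simp
  also have "\<dots> \<le> real (K ^ n) * exp (- real n * ln (real K) - t)"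
    using cL by (intro mult_right_mono) (simp_all only: of_nat_le_iff exp_ge_zero)
  also have "real (K ^ n) = exp (real n * ln (real K))"
    using K1 by (subst exp_of_nat_mult) simp
  also have "exp (real n * ln (real K)) * exp (- real n * ln (real K) - t) = exp (- t)"
    by (simp add: exp_add[symmetric])
  finally show ?thesis .
qed

lemma opnorm_add:
  "opnorm I J (\<lambda>i j. M1 i j + M2 i j) \<le> opnorm I J M1 + opnorm I J M2"
proof (rule opnorm_le)
  fix v assume v: "nrm2 J v \<le> 1"
  have "mv J (\<lambda>i j. M1 i j + M2 i j) v = (\<lambda>i. mv J M1 v i + mv J M2 v i)"
    unfolding mv_def by (simp add: algebra_simps sum.distrib)
  hence "sqrt (nrm2 I (mv J (\<lambda>i j. M1 i j + M2 i j) v)) = L2_set (\<lambda>i. mv J M1 v i + mv J M2 v i) I"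
    unfolding nrm2_def L2_set_def by simp
  also have "\<dots> \<le> L2_set (mv J M1 v) I + L2_set (mv J M2 v) I" by (rule L2_set_triangle_ineq)
  also have "\<dots> \<le> opnorm I J M1 + opnorm I J M2"
    using opnorm_ge[OF v, of I M1] opnorm_ge[OF v, of I M2] unfolding nrm2_def L2_set_def by simp
  finally show "sqrt (nrm2 I (mv J (\<lambda>i j. M1 i j + M2 i j) v)) \<le> opnorm I J M1 + opnorm I J M2" .
qed

lemma sq_split:
  fixes y u v a :: real
  assumes "0 \<le> y" "y \<le> u + v" "0 \<le> u" "0 \<le> v" "a > 0"
  shows "y\<^sup>2 \<le> (1 + a) * u\<^sup>2 + (1 + 1/a) * v\<^sup>2"
proof -
  have "y\<^sup>2 \<le> (u + v)\<^sup>2" using assms by (intro power_mono) auto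
  also have "\<dots> = u\<^sup>2 + v\<^sup>2 + 2 * u * v" by (simp add: power2_eq_square algebra_simps)
  also have "2 * u * v \<le> a * u\<^sup>2 + v\<^sup>2 / a"
  proof -
    have "0 \<le> (a * u - v)\<^sup>2 / a" using assms by simp
    also have "(a * u - v)\<^sup>2 / a = a * u\<^sup>2 + v\<^sup>2 / a - 2 * u * v"
      using assms by (simp add: power2_eq_square field_simps)
    finally show ?thesis by simp
  qed
  finally show ?thesis by (simp add: algebra_simps add_divide_distrib)
qed

lemma logsum:
  fixes x :: "'a \<Rightarrow> nat" and a :: "'a \<Rightarrow> real"
  assumes fin: "finite S" and xa: "\<And>p. p \<in> S \<Longrightarrow> real (x p) \<le> a p" and a0: "\<And>p. p \<in> S \<Longrightarrow> 0 < a p"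
  shows "(\<Sum>p\<in>S. real (x p) * ln (a p * exp 1 / real (x p))) \<le>
         real (\<Sum>p\<in>S. x p) * ln ((\<Sum>p\<in>S. a p) * exp 1 / real (\<Sum>p\<in>S. x p))"
proof (cases "(\<Sum>p\<in>S. x p) = 0")
  case True
  hence "\<forall>p\<in>S. x p = 0" using fin by simp
  thus ?thesis using True by simp
next
  case False
  define X where "X = real (\<Sum>p\<in>S. x p)"
  define A where "A = (\<Sum>p\<in>S. a p)"
  have "(\<Sum>p\<in>S. x p) > 0" using False by simp
  hence Xp: "X > 0" unfolding X_def by (simp only: of_nat_0_less_iff)
  have Xs: "X = (\<Sum>p\<in>S. real (x p))" unfolding X_def by simp
  have XA: "X \<le> A" unfolding Xs A_def using xa by (intro sum_mono) auto
  have Ap: "A > 0" using Xp XA by simp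
  have tm: "real (x p) * ln (a p * exp 1 / real (x p)) \<le> real (x p) * ln (A * exp 1 / X) + (a p * X / A - real (x p))"
    if p: "p \<in> S" for p
  proof (cases "x p = 0")
    case True
    thus ?thesis using a0[OF p] Xp Ap by simp
  next
    case False
    hence xp: "real (x p) > 0" by simp
    have "ln (a p * exp 1 / real (x p)) = ln (A * exp 1 / X) + ln (a p * X / (real (x p) * A))"
      using xp Xp Ap a0[OF p] by (simp add: ln_mult ln_div)
    moreover have "ln (a p * X / (real (x p) * A)) \<le> a p * X / (real (x p) * A) - 1"
      using xp Xp Ap a0[OF p] by (intro ln_le_minus_one) simp
    ultimately have "real (x p) * ln (a p * exp 1 / real (x p)) \<le>
        real (x p) * ln (A * exp 1 / X) + real (x p) * (a p * X / (real (x p) * A) - 1)"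
      using xp by (simp add: distrib_left)
    also have "real (x p) * (a p * X / (real (x p) * A) - 1) = a p * X / A - real (x p)"
      using xp Ap by (simp add: field_simps)
    finally show ?thesis .
  qed
  have "(\<Sum>p\<in>S. real (x p) * ln (a p * exp 1 / real (x p))) \<le>
      (\<Sum>p\<in>S. real (x p) * ln (A * exp 1 / X) + (a p * X / A - real (x p)))"
    by (intro sum_mono tm)
  also have "\<dots> = X * ln (A * exp 1 / X) + (A * X / A - X)"
    unfolding Xs A_def by (simp add: sum.distrib sum_subtractf sum_distrib_right sum_divide_distrib)
  also have "\<dots> = X * ln (A * exp 1 / X)" using Ap by simp
  finally show ?thesis unfolding X_def A_def .
qed

lemma xlog_mono:
  fixes x y c :: real
  assumes "0 < x" "x \<le> y" "y * exp 1 \<le> c"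
  shows "x * ln (c / x) \<le> y * ln (c / y)"
proof -
  have yp: "y > 0" using assms by simp
  have "y * exp 1 > 0" using yp by simp
  hence cp: "c > 0" using assms by linarith
  have e1: "ln (c / x) = ln (c / y) + ln (y / x)"
  proof -
    have "c / x = (c / y) * (y / x)" using yp assms(1) by (simp add: field_simps)
    hence "ln (c / x) = ln ((c / y) * (y / x))" by (rule arg_cong)
    also have "\<dots> = ln (c / y) + ln (y / x)" using yp cp assms(1) by (intro ln_mult_pos) auto
    finally show ?thesis .
  qed
  have e2: "ln (y / x) \<le> y / x - 1" using assms yp by (intro ln_le_minus_one) simp
  have "x * ln (c / x) = x * ln (c / y) + x * ln (y / x)" unfolding e1 by (simp add: distrib_left)
  also have "x * ln (y / x) \<le> x * (y / x - 1)" using e2 assms(1) by (intro mult_left_mono) auto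
  also have "x * (y / x - 1) = y - x" using assms by (simp add: field_simps)
  finally have a: "x * ln (c / x) \<le> x * ln (c / y) + (y - x)" by simp
  have "exp 1 \<le> c / y" using assms yp by (simp add: field_simps)
  hence "ln (exp 1) \<le> ln (c / y)" using yp cp by (subst ln_le_cancel_iff) auto
  hence "1 \<le> ln (c / y)" by simp
  hence "(y - x) * 1 \<le> (y - x) * ln (c / y)" using assms by (intro mult_left_mono) auto
  thus ?thesis using a by (simp add: algebra_simps)
qed

lemma sum_ln_le:
  fixes m :: "nat \<Rightarrow> nat"
  assumes "K > 0" "\<And>k. k < K \<Longrightarrow> m k \<ge> 1"
  shows "(\<Sum>k<K. ln (real (m k))) \<le> real K * ln (real (\<Sum>k<K. m k) / real K)"
proof -
  define N where "N = real (\<Sum>k<K. m k)"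
  have "m 0 \<le> (\<Sum>k<K. m k)" using assms(1) by (intro member_le_sum) auto
  hence Np: "N > 0" unfolding N_def using assms(2)[of 0] assms(1) by linarith
  have "ln (real (m k) * real K / N) \<le> real (m k) * real K / N - 1" if "k < K" for k
  proof -
    have "m k \<ge> 1" using assms(2) that by simp
    hence "real (m k) > 0" by simp
    thus ?thesis using assms(1) Np by (intro ln_le_minus_one) (auto intro!: divide_pos_pos mult_pos_pos)
  qed
  hence "(\<Sum>k<K. ln (real (m k) * real K / N)) \<le> (\<Sum>k<K. real (m k) * real K / N - 1)"
    by (intro sum_mono) auto
  also have "\<dots> = 0"
  proof -
    have "(\<Sum>k<K. real (m k)) = N" unfolding N_def by simp
    hence "(\<Sum>k<K. real (m k) * real K / N) = real K"
      using Np by (simp add: sum_divide_distrib[symmetric] sum_distrib_right[symmetric])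
    thus ?thesis unfolding sum_subtractf by simp
  qed
  finally have a: "(\<Sum>k<K. ln (real (m k) * real K / N)) \<le> 0" .
  have "(\<Sum>k<K. ln (real (m k) * real K / N)) = (\<Sum>k<K. ln (real (m k))) - real K * ln (N / real K)"
  proof -
    have "ln (real (m k) * real K / N) = ln (real (m k)) - ln (N / real K)" if "k < K" for k
    proof -
      have mk: "real (m k) > 0" using assms(2)[OF that] by simp
      have "real (m k) * real K / N = real (m k) / (N / real K)" using assms(1) Np by simp
      hence "ln (real (m k) * real K / N) = ln (real (m k) / (N / real K))" by (rule arg_cong)
      also have "\<dots> = ln (real (m k)) - ln (N / real K)" using mk Np assms(1) by (simp add: ln_div ln_mult)
      finally show ?thesis .
    qed
    hence "(\<Sum>k<K. ln (real (m k) * real K / N)) = (\<Sum>k<K. ln (real (m k)) - ln (N / real K))" by simp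
    thus ?thesis by (simp add: sum_subtractf)
  qed
  thus ?thesis using a unfolding N_def by simp
qed

lemma card_comm_sum:
  assumes "z \<in> labelings n K"
  shows "(\<Sum>k<K. card (comm n z k)) = n"
  using partition_sum[OF assms, of "\<lambda>k i. (1::nat)"] by simp

lemma comm_card_pos:
  assumes "z \<in> labelings n K" "k < K"
  shows "card (comm n z k) \<ge> 1"
proof -
  have "comm n z k \<noteq> {}" using assms unfolding labelings_def by auto
  thus ?thesis using finite_comm by (simp add: Suc_le_eq card_gt_0_iff)
qed

lemma n_pos:
  assumes "z \<in> labelings n K" "K \<ge> 1"
  shows "n \<ge> 1"
proof -
  have "card (comm n z 0) \<ge> 1" using comm_card_pos assms by simp
  moreover have "card (comm n z 0) \<le> n" using card_mono[OF _ comm_sub, of n z 0] by simp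
  ultimately show ?thesis by simp
qed

lemma fam_le:
  assumes z: "z \<in> labelings n K" and J: "\<forall>k<K. \<forall>l<K. J k l \<subseteq> comm n z k"
  shows "card_fam K J \<le> n * K"
proof -
  have "card_fam K J \<le> (\<Sum>k<K. \<Sum>l<K. card (comm n z k))"
    unfolding card_fam_def using J finite_comm by (intro sum_mono card_mono) auto
  also have "\<dots> = K * (\<Sum>k<K. card (comm n z k))" by (simp add: sum_distrib_left)
  also have "\<dots> = n * K" using card_comm_sum[OF z] by simp
  finally show ?thesis .
qed

lemma xlog_nonneg:
  assumes "real x \<le> c"
  shows "0 \<le> real x * ln (c * exp 1 / real x)"
proof (cases "x = 0")
  case True thus ?thesis by simp
next
  case False
  hence xp: "real x > 0" by simp
  hence "c * exp 1 / real x \<ge> exp 1" using assms by (simp add: field_simps)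
  hence "c * exp 1 / real x \<ge> 1" using one_le_exp_iff[of 1] by linarith
  thus ?thesis using xp by simp
qed

lemma xlog_ge_x:
  assumes "real x \<le> c"
  shows "real x \<le> real x * ln (c * exp 1 / real x)"
proof (cases "x = 0")
  case True thus ?thesis by simp
next
  case False
  hence xp: "real x > 0" by simp
  hence "c * exp 1 / real x \<ge> exp 1" using assms by (simp add: field_simps)
  moreover have e0: "exp 1 > (0::real)" by simp
  ultimately have pos: "c * exp 1 / real x > 0" by linarith
  have "ln (c * exp 1 / real x) \<ge> ln (exp 1)" using \<open>c * exp 1 / real x \<ge> exp 1\<close> e0 pos
    ln_le_cancel_iff[of "exp 1" "c * exp 1 / real x"] by blast
  hence "ln (c * exp 1 / real x) \<ge> 1" by simp
  thus ?thesis using xp by (simp add: mult_le_cancel_left1)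
qed

definition base :: "real \<Rightarrow> nat \<Rightarrow> nat \<Rightarrow> real" where
  "base \<beta>2 n K = \<beta>2 * (real n * ln (real K) + ln (real n))"

lemma pen_lower:
  assumes z: "z \<in> labelings n K" and K1: "K \<ge> 1" and J: "is_sparsity_family n K z J"
    and b1: "\<beta>1 > 0" and b2: "\<beta>2 > 0"
  shows "(if sp then pen_s \<beta>1 \<beta>2 n K z J else pen_ns \<beta>1 \<beta>2 n K J) \<ge> base \<beta>2 n K"
proof -
  have n1: "n \<ge> 1" by (rule n_pos[OF z K1])
  have Jsub: "\<forall>k<K. \<forall>l<K. J k l \<subseteq> comm n z k" using J unfolding is_sparsity_family_def .
  show ?thesis
  proof (cases sp)
    case True
    have t1: "0 \<le> (\<Sum>k<K. \<Sum>l<K. real (card (J k l)) * ln (real (card (comm n z k)) * exp 1 / real (card (J k l))))"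
    proof (intro sum_nonneg xlog_nonneg)
      fix k l assume "k \<in> {..<K}" "l \<in> {..<K}"
      hence "J k l \<subseteq> comm n z k" using Jsub by auto
      hence "card (J k l) \<le> card (comm n z k)" by (intro card_mono finite_comm)
      thus "real (card (J k l)) \<le> real (card (comm n z k))" by simp
    qed
    have t2: "0 \<le> (\<Sum>k<K. ln (real (card (comm n z k))))"
      using comm_card_pos[OF z] by (intro sum_nonneg) simp
    show ?thesis using True t1 t2 b1 b2 unfolding pen_s_def base_def by simp
  next
    case False
    have "real (card_fam K J) \<le> real n * real K" using fam_le[OF z Jsub] by (simp flip: of_nat_mult)
    hence t1: "0 \<le> real (card_fam K J) * ln (real n * real K * exp 1 / real (card_fam K J))"
      by (rule xlog_nonneg)
    have t2: "0 \<le> ln (real n)" using n1 by simp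
    show ?thesis using False t1 t2 b1 b2 unfolding pen_ns_def base_def by (simp add: mult.assoc)
  qed
qed

definition Jst :: "nat \<Rightarrow> (nat \<Rightarrow> nat) \<Rightarrow> (nat \<Rightarrow> nat \<Rightarrow> real) \<Rightarrow> nat \<Rightarrow> nat \<Rightarrow> nat set" where
  "Jst n zs \<Lambda> k l = {i \<in> comm n zs k. \<Lambda> i l \<noteq> 0}"

lemma Jst_sparsity: "is_sparsity_family n K zs (Jst n zs \<Lambda>)"
  unfolding is_sparsity_family_def Jst_def by auto

lemma Jst_card_fam: "card_fam K (Jst n zs \<Lambda>) = Jstar_card n K zs \<Lambda>"
  unfolding card_fam_def Jstar_card_def Jst_def ..

lemma Jst_nonempty:
  assumes A1: "\<forall>k<K. \<forall>c::nat \<Rightarrow> real. (\<forall>i \<in> comm n zs k. (\<Sum>l<K. c l * \<Lambda> i l) = 0) \<longrightarrow> (\<forall>l<K. c l = 0)"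
    and kl: "k < K" "l < K"
  shows "Jst n zs \<Lambda> k l \<noteq> {}"
proof
  assume e: "Jst n zs \<Lambda> k l = {}"
  define c where "c = (\<lambda>l'. if l' = l then (1::real) else 0)"
  have "(\<Sum>l'<K. c l' * \<Lambda> i l') = 0" if i: "i \<in> comm n zs k" for i
  proof -
    have "\<Lambda> i l = 0" using e i unfolding Jst_def by auto
    moreover have "(\<Sum>l'<K. c l' * \<Lambda> i l') = (\<Sum>l'<K. if l' = l then \<Lambda> i l' else 0)"
      by (intro sum.cong) (auto simp: c_def)
    moreover have "(\<Sum>l'<K. if l' = l then \<Lambda> i l' else 0) = \<Lambda> i l" using kl by (simp add: sum.delta)
    ultimately show ?thesis by simp
  qed
  hence "c l = 0" using A1 kl by blast
  thus False unfolding c_def by simp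
qed

lemma js_bounds:
  assumes zs: "zs \<in> labelings n K"
    and A1: "\<forall>k<K. \<forall>c::nat \<Rightarrow> real. (\<forall>i \<in> comm n zs k. (\<Sum>l<K. c l * \<Lambda> i l) = 0) \<longrightarrow> (\<forall>l<K. c l = 0)"
  shows "K * K \<le> Jstar_card n K zs \<Lambda>" "Jstar_card n K zs \<Lambda> \<le> n * K"
proof -
  have "(\<Sum>k<K. \<Sum>l<K. (1::nat)) \<le> (\<Sum>k<K. \<Sum>l<K. card (Jst n zs \<Lambda> k l))"
  proof (intro sum_mono)
    fix k l assume "k \<in> {..<K}" "l \<in> {..<K}"
    hence "Jst n zs \<Lambda> k l \<noteq> {}" using Jst_nonempty[OF A1] by auto
    moreover have "finite (Jst n zs \<Lambda> k l)" unfolding Jst_def using finite_comm by auto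
    ultimately show "1 \<le> card (Jst n zs \<Lambda> k l)" by (simp add: Suc_le_eq card_gt_0_iff)
  qed
  thus "K * K \<le> Jstar_card n K zs \<Lambda>" unfolding Jst_card_fam[symmetric] card_fam_def by simp
  show "Jstar_card n K zs \<Lambda> \<le> n * K" unfolding Jst_card_fam[symmetric]
    by (rule fam_le[OF zs]) (auto simp: Jst_def)
qed

lemma ln_n_le: "n \<ge> 1 \<Longrightarrow> K \<ge> 2 \<Longrightarrow> ln (real n) \<le> real n * ln (real K)"
proof -
  assume n1: "n \<ge> 1" and K2: "K \<ge> 2"
  have "n < 2 ^ n" by (rule less_exp)
  hence "real n < real (2 ^ n)" by (simp only: of_nat_less_iff)
  hence "real n < 2 ^ n" by simp
  hence "ln (real n) \<le> ln (2 ^ n)" using n1 by (subst ln_le_cancel_iff) auto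
  also have "ln ((2::real) ^ n) = real n * ln 2" by (simp add: ln_realpow)
  also have "\<dots> \<le> real n * ln (real K)" using K2 by (intro mult_left_mono) auto
  finally show ?thesis .
qed

lemma pen_upper:
  assumes zs: "zs \<in> labelings n K" and K2: "K \<ge> 2" and b1: "\<beta>1 > 0" and b2: "\<beta>2 > 0"
    and A1: "\<forall>k<K. \<forall>c::nat \<Rightarrow> real. (\<forall>i \<in> comm n zs k. (\<Sum>l<K. c l * \<Lambda> i l) = 0) \<longrightarrow> (\<forall>l<K. c l = 0)"
  shows "(if sp then pen_s \<beta>1 \<beta>2 n K zs (Jst n zs \<Lambda>) else pen_ns \<beta>1 \<beta>2 n K (Jst n zs \<Lambda>)) \<le>
    base \<beta>2 n K + (\<beta>1 + \<beta>2) * (real (Jstar_card n K zs \<Lambda>) * ln (real n * real K * exp 1 / real (Jstar_card n K zs \<Lambda>)))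
    + 4 * \<beta>2 * (real n * ln (real K))"
proof -
  define js where "js = Jstar_card n K zs \<Lambda>"
  define Lj where "Lj = real js * ln (real n * real K * exp 1 / real js)"
  have K1: "K \<ge> 1" using K2 by simp
  have n1: "n \<ge> 1" by (rule n_pos[OF zs K1])
  have jsK: "K * K \<le> js" "js \<le> n * K" using js_bounds[OF zs A1] unfolding js_def by auto
  have Lj0: "0 \<le> Lj" unfolding Lj_def using jsK(2) by (intro xlog_nonneg) (simp flip: of_nat_mult)
  have lnK: "0 \<le> ln (real K)" using K1 by simp
  define m where "m = (\<lambda>k. card (comm n zs k))"
  have m1: "\<And>k. k < K \<Longrightarrow> m k \<ge> 1" unfolding m_def using comm_card_pos[OF zs] by auto
  have msum: "(\<Sum>k<K. m k) = n" unfolding m_def by (rule card_comm_sum[OF zs])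
  have T1: "(\<Sum>k<K. \<Sum>l<K. real (card (Jst n zs \<Lambda> k l)) * ln (real (m k) * exp 1 / real (card (Jst n zs \<Lambda> k l)))) \<le> Lj"
  proof -
    define x where "x = (\<lambda>p::nat\<times>nat. card (Jst n zs \<Lambda> (fst p) (snd p)))"
    define a where "a = (\<lambda>p::nat\<times>nat. real (m (fst p)))"
    have fin: "finite (BlkK K)" unfolding BlkK_def by simp
    have xa: "real (x p) \<le> a p" if "p \<in> BlkK K" for p
    proof -
      have "Jst n zs \<Lambda> (fst p) (snd p) \<subseteq> comm n zs (fst p)" unfolding Jst_def by auto
      hence "card (Jst n zs \<Lambda> (fst p) (snd p)) \<le> m (fst p)" unfolding m_def by (intro card_mono finite_comm)
      thus ?thesis unfolding x_def a_def by simp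
    qed
    have a0: "0 < a p" if "p \<in> BlkK K" for p using m1[of "fst p"] that unfolding a_def BlkK_def by auto
    have "(\<Sum>p\<in>BlkK K. real (x p) * ln (a p * exp 1 / real (x p))) \<le>
         real (\<Sum>p\<in>BlkK K. x p) * ln ((\<Sum>p\<in>BlkK K. a p) * exp 1 / real (\<Sum>p\<in>BlkK K. x p))"
      by (rule logsum[OF fin xa a0])
    moreover have "(\<Sum>p\<in>BlkK K. x p) = js" unfolding sum_BlkK x_def js_def Jstar_card_def Jst_def by simp
    moreover have "(\<Sum>p\<in>BlkK K. a p) = real n * real K"
    proof -
      have "(\<Sum>p\<in>BlkK K. a p) = (\<Sum>k<K. \<Sum>l<K. real (m k))" unfolding sum_BlkK a_def by simp
      also have "\<dots> = real K * real (\<Sum>k<K. m k)" by (simp add: sum_distrib_left)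
      finally show ?thesis using msum by simp
    qed
    moreover have "(\<Sum>p\<in>BlkK K. real (x p) * ln (a p * exp 1 / real (x p))) =
        (\<Sum>k<K. \<Sum>l<K. real (card (Jst n zs \<Lambda> k l)) * ln (real (m k) * exp 1 / real (card (Jst n zs \<Lambda> k l))))"
      unfolding sum_BlkK x_def a_def by simp
    ultimately show ?thesis unfolding Lj_def by simp
  qed
  have T2: "real K * (\<Sum>k<K. ln (real (m k))) \<le> Lj"
  proof -
    have "(\<Sum>k<K. ln (real (m k))) \<le> real K * ln (real n / real K)"
      using sum_ln_le[of K m] K1 m1 msum by simp
    hence a: "real K * (\<Sum>k<K. ln (real (m k))) \<le> real K * (real K * ln (real n / real K))"
      by (intro mult_left_mono) auto
    show ?thesis
    proof (cases "real n \<le> real K")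
      case True
      hence "ln (real n / real K) \<le> 0" using n1 K1 by (simp add: ln_div)
      hence "real K * (real K * ln (real n / real K)) \<le> 0" by (simp add: mult_nonpos_nonneg mult_nonneg_nonpos)
      thus ?thesis using a Lj0 by linarith
    next
      case False
      have "ln (real n / real K) \<le> ln (real n * real K * exp 1 / real (K * K))"
      proof -
        have "real n * real K * exp 1 / real (K * K) = (real n / real K) * exp 1" using K1 by simp
        moreover have "real n / real K \<le> (real n / real K) * exp 1"
        proof -
          have "real n / real K \<ge> 0" by simp
          moreover have "(1::real) \<le> exp 1" by simp
          ultimately show ?thesis using mult_left_mono[of 1 "exp 1" "real n / real K"] by simp
        qed
        moreover have "real n / real K > 0" using n1 K1 by simp
        ultimately show ?thesis by (subst ln_le_cancel_iff) auto
      qed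
      hence "real (K * K) * ln (real n / real K) \<le> real (K * K) * ln (real n * real K * exp 1 / real (K * K))"
        by (rule mult_left_mono) simp
      hence "real K * (real K * ln (real n / real K)) \<le> real (K * K) * ln (real n * real K * exp 1 / real (K * K))"
        by (simp only: of_nat_mult mult.assoc)
      also have "\<dots> \<le> real js * ln (real n * real K * exp 1 / real js)"
        by (rule xlog_mono) (use jsK K1 in \<open>auto simp flip: of_nat_mult\<close>)
      finally show ?thesis using a unfolding Lj_def by linarith
    qed
  qed
  show ?thesis
  proof (cases sp)
    case True
    define S1 where "S1 = (\<Sum>k<K. \<Sum>l<K. real (card (Jst n zs \<Lambda> k l)) * ln (real (m k) * exp 1 / real (card (Jst n zs \<Lambda> k l))))"
    define S2 where "S2 = (\<Sum>k<K. ln (real (m k)))"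
    have e: "pen_s \<beta>1 \<beta>2 n K zs (Jst n zs \<Lambda>) = \<beta>1 * S1 + \<beta>2 * (real K * S2) + base \<beta>2 n K"
      unfolding pen_s_def base_def S1_def S2_def m_def by (simp add: mult.assoc)
    have "\<beta>1 * S1 \<le> \<beta>1 * Lj" using T1 b1 unfolding S1_def by (intro mult_left_mono) auto
    moreover have "\<beta>2 * (real K * S2) \<le> \<beta>2 * Lj" using T2 b2 unfolding S2_def by (intro mult_left_mono) auto
    ultimately have "pen_s \<beta>1 \<beta>2 n K zs (Jst n zs \<Lambda>) \<le> \<beta>1 * Lj + \<beta>2 * Lj + base \<beta>2 n K"
      unfolding e by linarith
    moreover have "0 \<le> 4 * \<beta>2 * (real n * ln (real K))" using b2 lnK by simp
    ultimately show ?thesis using True unfolding Lj_def js_def by (simp add: algebra_simps)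
  next
    case False
    have "2 * \<beta>2 * ln (real n) \<le> 4 * \<beta>2 * (real n * ln (real K))"
    proof -
      have "ln (real n) \<le> real n * ln (real K)" by (rule ln_n_le[OF n1 K2])
      moreover have "0 \<le> real n * ln (real K)" using lnK by simp
      ultimately show ?thesis using b2 by (simp add: mult_left_mono)
    qed
    moreover have "0 \<le> \<beta>2 * Lj" using b2 Lj0 by simp
    moreover have "pen_ns \<beta>1 \<beta>2 n K (Jst n zs \<Lambda>) = \<beta>1 * Lj + 2 * \<beta>2 * ln (real n) + base \<beta>2 n K"
      unfolding pen_ns_def base_def Jst_card_fam Lj_def js_def by (simp add: mult.assoc)
    ultimately show ?thesis using False unfolding Lj_def js_def by (simp add: algebra_simps)
  qed
qed

lemma frob2_cong: "(\<And>i j. i \<in> I \<Longrightarrow> j \<in> J \<Longrightarrow> M1 i j = M2 i j) \<Longrightarrow> frob2 I J M1 = frob2 I J M2"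
  unfolding frob2_def by (intro sum.cong refl) auto

lemma crit_lower:
  assumes z: "z \<in> labelings n K" and K1: "K \<ge> 1" and J: "is_sparsity_family n K z J"
    and b1: "\<beta>1 > 0" and b2: "\<beta>2 > 0"
  shows "crit \<beta>1 \<beta>2 sp n K A z J \<ge> frob2 {..<n} {..<n} A
           - (\<Sum>k<K. \<Sum>l<K. (opnorm (comm n z k) (comm n z l) A)\<^sup>2) + base \<beta>2 n K"
proof -
  have blk: "frob2 (comm n z k) (comm n z l)
        (\<lambda>i j. A i j - best_rank1 (comm n z k) (comm n z l) (sparse_proj J k l A) i j)
      \<ge> frob2 (comm n z k) (comm n z l) A - (opnorm (comm n z k) (comm n z l) A)\<^sup>2" for k l
  proof (rule rank1_lower[OF finite_comm])
    show "best_rank1 (comm n z k) (comm n z l) (sparse_proj J k l A) \<in> rank_le1"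
      using best_rank1_prop[OF finite_comm finite_comm] by blast
  qed
  have "(\<Sum>k<K. \<Sum>l<K. frob2 (comm n z k) (comm n z l)
        (\<lambda>i j. A i j - best_rank1 (comm n z k) (comm n z l) (sparse_proj J k l A) i j))
     \<ge> (\<Sum>k<K. \<Sum>l<K. frob2 (comm n z k) (comm n z l) A - (opnorm (comm n z k) (comm n z l) A)\<^sup>2)"
    by (intro sum_mono blk)
  also have "(\<Sum>k<K. \<Sum>l<K. frob2 (comm n z k) (comm n z l) A - (opnorm (comm n z k) (comm n z l) A)\<^sup>2)
      = frob2 {..<n} {..<n} A - (\<Sum>k<K. \<Sum>l<K. (opnorm (comm n z k) (comm n z l) A)\<^sup>2)"
    using frob2_partition[OF z, of A] by (simp add: sum_subtractf)
  finally have a: "frob2 {..<n} {..<n} A - (\<Sum>k<K. \<Sum>l<K. (opnorm (comm n z k) (comm n z l) A)\<^sup>2) \<le>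
      (\<Sum>k<K. \<Sum>l<K. frob2 (comm n z k) (comm n z l)
        (\<lambda>i j. A i j - best_rank1 (comm n z k) (comm n z l) (sparse_proj J k l A) i j))" .
  have p: "(if sp then pen_s \<beta>1 \<beta>2 n K z J else pen_ns \<beta>1 \<beta>2 n K J) \<ge> base \<beta>2 n K"
    by (rule pen_lower[OF z K1 J b1 b2])
  show ?thesis using a p unfolding crit_def by linarith
qed

lemma crit_upper:
  assumes zs: "zs \<in> labelings n K"
    and om: "\<omega> \<in> set_pmf (edge_pmf n P)"
    and Pdef: "\<forall>i<n. \<forall>j<n. P i j = \<Lambda> i (zs j) * \<Lambda> j (zs i)"
  shows "crit \<beta>1 \<beta>2 sp n K (adj n \<omega>) zs (Jst n zs \<Lambda>) \<le>
     frob2 {..<n} {..<n} (\<lambda>i j. adj n \<omega> i j - P i j)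
     + (if sp then pen_s \<beta>1 \<beta>2 n K zs (Jst n zs \<Lambda>) else pen_ns \<beta>1 \<beta>2 n K (Jst n zs \<Lambda>))"
proof -
  define A where "A = adj n \<omega>"
  have sym: "\<forall>i<n. \<forall>j<n. P i j = P j i" using Pdef by (simp add: mult.commute)
  have blk: "frob2 (comm n zs k) (comm n zs l)
        (\<lambda>i j. A i j - best_rank1 (comm n zs k) (comm n zs l) (sparse_proj (Jst n zs \<Lambda>) k l A) i j)
      \<le> frob2 (comm n zs k) (comm n zs l) (\<lambda>i j. A i j - P i j)" for k l
  proof -
    define I where "I = comm n zs k"
    define J where "J = comm n zs l"
    define Y where "Y = sparse_proj (Jst n zs \<Lambda>) k l A"
    define R where "R = best_rank1 I J Y"
    define R' where "R' = (\<lambda>i j. \<Lambda> i l * \<Lambda> j k)"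
    have R'r: "R' \<in> rank_le1" unfolding rank_le1_def R'_def
      by (rule CollectI, rule exI[of _ "\<lambda>i. \<Lambda> i l"], rule exI[of _ "\<lambda>j. \<Lambda> j k"]) simp
    have YA: "Y i j = A i j" if "i \<in> I" "j \<in> J" for i j
    proof (cases "i \<in> Jst n zs \<Lambda> k l \<and> j \<in> Jst n zs \<Lambda> l k")
      case True thus ?thesis unfolding Y_def sparse_proj_def by simp
    next
      case False
      have ij: "i < n" "j < n" "zs i = k" "zs j = l" using that unfolding I_def J_def comm_def by auto
      have "\<Lambda> i l = 0 \<or> \<Lambda> j k = 0" using False that unfolding Jst_def I_def J_def by auto
      hence "P i j = 0" using Pdef ij by auto
      hence "A i j = 0" unfolding A_def using support_adj[OF om ij(1,2) _ sym] by blast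
      thus ?thesis using False unfolding Y_def sparse_proj_def by simp
    qed
    have R'P: "R' i j = P i j" if "i \<in> I" "j \<in> J" for i j
    proof -
      have ij: "i < n" "j < n" "zs i = k" "zs j = l" using that unfolding I_def J_def comm_def by auto
      thus ?thesis using Pdef unfolding R'_def by auto
    qed
    have "frob2 I J (\<lambda>i j. A i j - R i j) = frob2 I J (\<lambda>i j. Y i j - R i j)"
      using YA by (intro frob2_cong) auto
    also have "\<dots> \<le> frob2 I J (\<lambda>i j. Y i j - R' i j)"
      using best_rank1_prop[OF finite_comm finite_comm, of n zs k n zs l Y] R'r
      unfolding R_def I_def J_def by blast
    also have "\<dots> = frob2 I J (\<lambda>i j. A i j - P i j)"
      using YA R'P by (intro frob2_cong) auto
    finally show ?thesis unfolding R_def Y_def I_def J_def .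
  qed
  have "(\<Sum>k<K. \<Sum>l<K. frob2 (comm n zs k) (comm n zs l)
        (\<lambda>i j. A i j - best_rank1 (comm n zs k) (comm n zs l) (sparse_proj (Jst n zs \<Lambda>) k l A) i j))
      \<le> (\<Sum>k<K. \<Sum>l<K. frob2 (comm n zs k) (comm n zs l) (\<lambda>i j. A i j - P i j))"
    by (intro sum_mono blk)
  also have "\<dots> = frob2 {..<n} {..<n} (\<lambda>i j. A i j - P i j)" by (rule frob2_partition[OF zs])
  finally show ?thesis unfolding crit_def A_def by simp
qed

lemma frob2_diff:
  "frob2 {..<n} {..<n} (\<lambda>i j. A i j - P i j) =
   frob2 {..<n} {..<n} A - frob2 {..<n} {..<n} P - 2 * (\<Sum>i<n. \<Sum>j<n. P i j * (A i j - P i j))"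
  unfolding frob2_def
  by (simp add: power2_eq_square algebra_simps sum_subtractf sum.distrib sum_distrib_left)

lemma amgm_sqrt:
  fixes x y :: real
  assumes "x \<ge> 0" "y \<ge> 0" "c > 0"
  shows "sqrt (x * y) \<le> c * x + y / (4 * c)"
proof -
  define p where "p = c * x"
  define q where "q = y / (4 * c)"
  have pq: "4 * p * q = x * y" unfolding p_def q_def using assms by (simp add: field_simps)
  have "(p + q)\<^sup>2 = (p - q)\<^sup>2 + 4 * p * q" by (simp add: power2_eq_square algebra_simps)
  moreover have "0 \<le> (p - q)\<^sup>2" by simp
  ultimately have "x * y \<le> (c * x + y / (4 * c))\<^sup>2" using pq unfolding p_def q_def by linarith
  hence "sqrt (x * y) \<le> sqrt ((c * x + y / (4 * c))\<^sup>2)" by (rule real_sqrt_le_mono)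
  also have "\<dots> = c * x + y / (4 * c)" using assms by simp
  finally show ?thesis .
qed

lemma lin_aux:
  fixes A B C Dd E F G H I J Bb L2 D :: real
  assumes "7 / 8 * (3880 * A + 8 * B + 3880 * C + 8 * Dd + 3880 * E + 8 * F + 3880 * G + 8 * H + 2 * I + 2 * J)
           \<le> 2400 * Bb + 2400 * E + 2400 * G + D + 4 * G"
    and "Bb \<le> A" "0 \<le> B" "0 \<le> C" "0 \<le> Dd" "2 * L2 \<le> F" "0 < G" "0 \<le> H" "0 \<le> I" "0 \<le> J"
    "0 \<le> L2" "0 \<le> E" "0 \<le> Bb" "D \<le> I + J + 4 * L2"
  shows False
proof -
  have "3395 * A + 7 * B + 3395 * C + 7 * Dd + 3395 * E + 7 * F + 3395 * G + 7 * H + 7/4 * I + 7/4 * J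
           \<le> 2400 * Bb + 2400 * E + 2400 * G + D + 4 * G" using assms(1) by (simp add: algebra_simps)
  thus False using assms(2-) by linarith
qed

lemma final_arith:
  fixes FP S N Lb b js Lj L t \<alpha> \<beta>1 \<beta>2 D ip H1 H2 :: real
  assumes \<alpha>: "0 < \<alpha>" "\<alpha> < 1/2" and t: "t > 0" and S0: "S \<ge> 0" and N0: "N \<ge> 0"
    and b0: "0 \<le> b" "b \<le> Lb" and js0: "0 \<le> js" and Lj0: "0 \<le> Lj" and L0: "0 \<le> L"
    and b1: "\<beta>1 > 0" and b2: "\<beta>2 > 0" and FP0: "FP \<ge> 0"
    and hyp: "FP \<ge> (1 + \<alpha>) * S + H1 / \<alpha> * Lb + H1 / \<alpha> * (js + L + t) + H2 * Lj"
    and H1: "H1 = 3880 + 8 * \<beta>2" and H2: "H2 = 2 * (\<beta>1 + \<beta>2)"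
    and G1: "ip \<ge> - sqrt (FP * t)"
    and G2: "N \<le> 480 * (b + L + t)"
    and opt: "FP + 2 * ip \<le> (1 + \<alpha> / 4) * S + (1 + 1 / (\<alpha> / 4)) * N + D"
    and Dle: "D \<le> (\<beta>1 + \<beta>2) * Lj + 4 * \<beta>2 * L"
  shows False
proof -
  define u where "u = 1 / \<alpha>"
  have u2: "u > 2" unfolding u_def using \<alpha> by (simp add: field_simps)
  have ua: "u * \<alpha> = 1" unfolding u_def using \<alpha> by simp
  have sq: "sqrt (FP * t) \<le> (\<alpha> / 8) * FP + 2 * u * t"
  proof -
    have "sqrt (FP * t) \<le> (\<alpha> / 8) * FP + t / (4 * (\<alpha> / 8))" using FP0 t \<alpha> by (intro amgm_sqrt) auto
    also have "t / (4 * (\<alpha> / 8)) = 2 * u * t" unfolding u_def using \<alpha> by (simp add: field_simps)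
    finally show ?thesis .
  qed
  have e1: "1 + 1 / (\<alpha> / 4) = 1 + 4 * u" unfolding u_def by simp
  have "(1 + 4 * u) * N \<le> (5 * u) * N" using u2 N0 by (intro mult_right_mono) auto
  also have "\<dots> \<le> (5 * u) * (480 * (b + L + t))" using u2 G2 by (intro mult_left_mono) auto
  finally have nN: "(1 + 1 / (\<alpha> / 4)) * N \<le> 2400 * (u * b) + 2400 * (u * L) + 2400 * (u * t)"
    unfolding e1 by (simp add: algebra_simps)
  have star: "(1 - \<alpha> / 4) * FP - 4 * (u * t) \<le> (1 + \<alpha> / 4) * S + 2400 * (u * b) + 2400 * (u * L) + 2400 * (u * t) + D"
    using opt G1 sq nN by (simp add: algebra_simps)
  define Rest where "Rest = H1 / \<alpha> * Lb + H1 / \<alpha> * (js + L + t) + H2 * Lj"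
  have Rest_eq: "Rest = 3880 * (u * Lb) + 8 * (\<beta>2 * (u * Lb)) + 3880 * (u * js) + 8 * (\<beta>2 * (u * js))
      + 3880 * (u * L) + 8 * (\<beta>2 * (u * L)) + 3880 * (u * t) + 8 * (\<beta>2 * (u * t)) + 2 * (\<beta>1 * Lj) + 2 * (\<beta>2 * Lj)"
    unfolding Rest_def H1 H2 u_def by (simp add: algebra_simps add_divide_distrib)
  have p1: "u * b \<le> u * Lb" using b0 u2 by (intro mult_left_mono) auto
  have p2: "0 \<le> \<beta>2 * (u * Lb)" using b0 u2 b2 by simp
  have p3: "0 \<le> u * js" "0 \<le> \<beta>2 * (u * js)" using js0 u2 b2 by auto
  have p4: "2 * (\<beta>2 * L) \<le> \<beta>2 * (u * L)" using u2 b2 L0 by (simp add: mult_right_mono)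
  have p5: "0 < u * t" "0 \<le> \<beta>2 * (u * t)" using u2 t b2 by auto
  have p6: "0 \<le> \<beta>1 * Lj" "0 \<le> \<beta>2 * Lj" "0 \<le> \<beta>2 * L" using b1 b2 Lj0 L0 by auto
  have p7: "0 \<le> u * L" using u2 L0 by simp
  have p8: "0 \<le> u * b" using u2 b0 by simp
  have Rest0: "Rest \<ge> 0" unfolding Rest_eq using p1 p2 p3 p4 p5 p6 p7 p8 by linarith
  have hyp': "FP \<ge> (1 + \<alpha>) * S + Rest" using hyp unfolding Rest_def by simp
  have m: "(1 - \<alpha> / 4) * FP \<ge> (1 - \<alpha> / 4) * ((1 + \<alpha>) * S + Rest)"
    using hyp' \<alpha> by (intro mult_left_mono) auto
  have c1: "(1 - \<alpha> / 4) * ((1 + \<alpha>) * S) \<ge> (1 + \<alpha> / 4) * S"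
  proof -
    have "\<alpha> * \<alpha> \<le> 2 * \<alpha>" using \<alpha> by (intro mult_right_mono) auto
    moreover have "(1 - \<alpha> / 4) * (1 + \<alpha>) = 1 + 3 * \<alpha> / 4 - (\<alpha> * \<alpha>) / 4" by (simp add: field_simps)
    ultimately have "(1 - \<alpha> / 4) * (1 + \<alpha>) \<ge> 1 + \<alpha> / 4" by linarith
    hence "((1 - \<alpha> / 4) * (1 + \<alpha>)) * S \<ge> (1 + \<alpha> / 4) * S" using S0 by (intro mult_right_mono) auto
    thus ?thesis by (simp add: mult.assoc)
  qed
  have c2: "(1 - \<alpha> / 4) * Rest \<ge> (7 / 8) * Rest" using Rest0 \<alpha> by (intro mult_right_mono) auto
  have "(1 - \<alpha> / 4) * ((1 + \<alpha>) * S + Rest) = (1 - \<alpha> / 4) * ((1 + \<alpha>) * S) + (1 - \<alpha> / 4) * Rest"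
    by (simp add: distrib_left)
  hence fin: "(7 / 8) * Rest \<le> 2400 * (u * b) + 2400 * (u * L) + 2400 * (u * t) + D + 4 * (u * t)"
    using star m c1 c2 by linarith
  have Dle': "D \<le> \<beta>1 * Lj + \<beta>2 * Lj + 4 * (\<beta>2 * L)" using Dle by (simp add: algebra_simps)
  show False using lin_aux[OF fin[unfolded Rest_eq] p1 p2 p3 p4 p5 p6 p7 p8 Dle'] by simp
qed

lemma breve_le:
  assumes z: "z \<in> labelings n K"
  shows "breve_card n K P z \<le> n * K"
proof -
  have "breve_card n K P z \<le> (\<Sum>k<K. \<Sum>l<K. card (comm n z k))"
    unfolding breve_card_def using finite_comm by (intro sum_mono card_mono) auto
  also have "\<dots> = K * (\<Sum>k<K. card (comm n z k))" by (simp add: sum_distrib_left)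
  also have "\<dots> = n * K" using card_comm_sum[OF z] by simp
  finally show ?thesis .
qed

lemma N_bound:
  assumes z: "z \<in> labelings n K" and K1: "K \<ge> 1" and t: "t > 0"
    and om: "\<omega> \<in> set_pmf (edge_pmf n P)" and sym: "\<forall>i<n. \<forall>j<n. P i j = P j i"
    and notB2: "\<forall>T\<in>blocks.nets (BlkK K) (RrZ n P z) (RcZ n P z).
                  \<not> sZ n K P t z \<le> FfZ n K z (Eom n P \<omega>) (fst T) (fst (snd T)) (snd (snd T))"
  shows "(\<Sum>k<K. \<Sum>l<K. (opnorm (comm n z k) (comm n z l) (Eom n P \<omega>))\<^sup>2)
           \<le> 480 * (real (breve_card n K P z) + real n * ln (real K) + t)"
proof -
  interpret B: blocks "BlkK K" "IrZ n z" "JcZ n z" "RrZ n P z" "RcZ n P z" "Eom n P \<omega>"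
    by (rule blocks_omega[OF om sym])
  have FfZ_eq: "B.Ff U V X = FfZ n K z (Eom n P \<omega>) U V X" for U V X
    unfolding B.Ff_def B.bl_def FfZ_def ..
  have "\<forall>(U, V, X)\<in>B.nets. B.Ff U V X \<le> sZ n K P t z"
    using notB2 unfolding FfZ_eq by fastforce
  hence a: "B.Nsum \<le> 16 * (sZ n K P t z)\<^sup>2" by (rule B.net_bound)
  have b: "B.Nsum = (\<Sum>k<K. \<Sum>l<K. (opnorm (comm n z k) (comm n z l) (Eom n P \<omega>))\<^sup>2)"
    unfolding B.Nsum_def B.on_def sum_BlkK IrZ_def JcZ_def by simp
  have lnK: "0 \<le> ln (real K)" using K1 by simp
  have s2: "(sZ n K P t z)\<^sup>2 = 30 * real (breve_card n K P z) * ln 2 + real n * ln (real K) + t"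
    unfolding sZ_def using lnK t by (intro real_sqrt_pow2) (auto intro!: add_nonneg_nonneg)
  have l2: "ln (2::real) \<le> 1" using ln_2_less_1 by simp
  have x1: "real (breve_card n K P z) * ln 2 \<le> real (breve_card n K P z)"
    using l2 by (simp add: mult_left_le)
  have x2: "0 \<le> real n * ln (real K)" using lnK by simp
  have "16 * (sZ n K P t z)\<^sup>2 = 480 * (real (breve_card n K P z) * ln 2) + 16 * (real n * ln (real K)) + 16 * t"
    unfolding s2 by (simp add: algebra_simps)
  hence "16 * (sZ n K P t z)\<^sup>2 \<le> 480 * real (breve_card n K P z) + 480 * (real n * ln (real K)) + 480 * t"
    using x1 x2 t by linarith
  hence "16 * (sZ n K P t z)\<^sup>2 \<le> 480 * (real (breve_card n K P z) + real n * ln (real K) + t)"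
    by (simp add: algebra_simps)
  thus ?thesis using a b by simp
qed

lemma det_core:
  fixes \<beta>1 \<beta>2 :: real
  assumes b1: "\<beta>1 > 0" and b2: "\<beta>2 > 0" and K2: "K \<ge> 2" and zs: "zs \<in> labelings n K"
    and Pdef: "\<forall>i<n. \<forall>j<n. P i j = \<Lambda> i (zs j) * \<Lambda> j (zs i)"
    and A1: "\<forall>k<K. \<forall>c::nat \<Rightarrow> real. (\<forall>i \<in> comm n zs k. (\<Sum>l<K. c l * \<Lambda> i l) = 0) \<longrightarrow> (\<forall>l<K. c l = 0)"
    and \<alpha>: "0 < \<alpha>" "\<alpha> < 1/2" and t: "t > 0"
    and est: "is_estimate \<beta>1 \<beta>2 sp n K (adj n \<omega>) (Zhat (adj n \<omega>))"
    and hyp: "\<forall>z \<in> labelings n K. misclass n K z zs \<ge> \<delta> \<longrightarrow>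
         frob2 {..<n} {..<n} P \<ge>
           (1 + \<alpha>) * (\<Sum>k<K. \<Sum>l<K. (opnorm (comm n z k) (comm n z l) P)\<^sup>2)
           + (3880 + 8 * \<beta>2) / \<alpha> * real (breve_card n K P z)
               * ln (real n * real K * exp 1 / real (breve_card n K P z))
           + (3880 + 8 * \<beta>2) / \<alpha> * (real (Jstar_card n K zs \<Lambda>) + real n * ln (real K) + t)
           + (2 * (\<beta>1 + \<beta>2)) * real (Jstar_card n K zs \<Lambda>)
               * ln (real n * real K * exp 1 / real (Jstar_card n K zs \<Lambda>))"
    and om: "\<omega> \<in> set_pmf (edge_pmf n P)"
    and G1: "\<not> (\<Sum>i<n. \<Sum>j<n. P i j * (adj n \<omega> i j - P i j)) < - sqrt (frob2 {..<n} {..<n} P * t)"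
    and notB2: "\<forall>z\<in>labelings n K. \<forall>T\<in>blocks.nets (BlkK K) (RrZ n P z) (RcZ n P z).
                  \<not> sZ n K P t z \<le> FfZ n K z (Eom n P \<omega>) (fst T) (fst (snd T)) (snd (snd T))"
  shows "misclass n K (Zhat (adj n \<omega>)) zs \<le> \<delta>"
proof (rule ccontr)
  assume nm: "\<not> misclass n K (Zhat (adj n \<omega>)) zs \<le> \<delta>"
  define A where "A = adj n \<omega>"
  define z where "z = Zhat A"
  have K1: "K \<ge> 1" using K2 by simp
  have sym: "\<forall>i<n. \<forall>j<n. P i j = P j i" using Pdef by (simp add: mult.commute)
  obtain J where z: "z \<in> labelings n K" and J: "is_sparsity_family n K z J"
    and opt0: "\<And>z' J'. z' \<in> labelings n K \<Longrightarrow> is_sparsity_family n K z' J' \<Longrightarrow>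
                 crit \<beta>1 \<beta>2 sp n K A z J \<le> crit \<beta>1 \<beta>2 sp n K A z' J'"
    using est unfolding is_estimate_def z_def A_def by blast
  have mz: "misclass n K z zs \<ge> \<delta>" using nm unfolding z_def A_def by simp
  define FP where "FP = frob2 {..<n} {..<n} P"
  define FA where "FA = frob2 {..<n} {..<n} A"
  define S where "S = (\<Sum>k<K. \<Sum>l<K. (opnorm (comm n z k) (comm n z l) P)\<^sup>2)"
  define E where "E = Eom n P \<omega>"
  define N where "N = (\<Sum>k<K. \<Sum>l<K. (opnorm (comm n z k) (comm n z l) E)\<^sup>2)"
  define SA where "SA = (\<Sum>k<K. \<Sum>l<K. (opnorm (comm n z k) (comm n z l) A)\<^sup>2)"
  define b where "b = real (breve_card n K P z)"
  define Lb where "Lb = b * ln (real n * real K * exp 1 / b)"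
  define js where "js = real (Jstar_card n K zs \<Lambda>)"
  define Lj where "Lj = js * ln (real n * real K * exp 1 / js)"
  define L where "L = real n * ln (real K)"
  define ip where "ip = (\<Sum>i<n. \<Sum>j<n. P i j * (A i j - P i j))"
  define D where "D = (\<beta>1 + \<beta>2) * Lj + 4 * \<beta>2 * L"
  have c1: "crit \<beta>1 \<beta>2 sp n K A z J \<ge> FA - SA + base \<beta>2 n K"
    unfolding FA_def SA_def by (rule crit_lower[OF z K1 J b1 b2])
  have c2: "crit \<beta>1 \<beta>2 sp n K A zs (Jst n zs \<Lambda>) \<le> FA - FP - 2 * ip + base \<beta>2 n K + D"
  proof -
    have "crit \<beta>1 \<beta>2 sp n K A zs (Jst n zs \<Lambda>) \<le> frob2 {..<n} {..<n} (\<lambda>i j. A i j - P i j)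
       + (if sp then pen_s \<beta>1 \<beta>2 n K zs (Jst n zs \<Lambda>) else pen_ns \<beta>1 \<beta>2 n K (Jst n zs \<Lambda>))"
      unfolding A_def by (rule crit_upper[OF zs om Pdef])
    moreover have "(if sp then pen_s \<beta>1 \<beta>2 n K zs (Jst n zs \<Lambda>) else pen_ns \<beta>1 \<beta>2 n K (Jst n zs \<Lambda>)) \<le>
        base \<beta>2 n K + D"
      using pen_upper[OF zs K2 b1 b2 A1, of sp] unfolding D_def Lj_def js_def L_def by simp
    moreover have "frob2 {..<n} {..<n} (\<lambda>i j. A i j - P i j) = FA - FP - 2 * ip"
      unfolding FA_def FP_def ip_def by (rule frob2_diff)
    ultimately show ?thesis by linarith
  qed
  have c3: "crit \<beta>1 \<beta>2 sp n K A z J \<le> crit \<beta>1 \<beta>2 sp n K A zs (Jst n zs \<Lambda>)"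
    by (rule opt0[OF zs Jst_sparsity])
  have opt1: "FP + 2 * ip \<le> SA + D" using c1 c2 c3 by linarith
  have AE: "A = (\<lambda>i j. P i j + E i j)" unfolding A_def E_def Eom_def by simp
  have SA_le: "SA \<le> (1 + \<alpha> / 4) * S + (1 + 1 / (\<alpha> / 4)) * N"
  proof -
    have "(opnorm (comm n z k) (comm n z l) A)\<^sup>2 \<le>
        (1 + \<alpha> / 4) * (opnorm (comm n z k) (comm n z l) P)\<^sup>2 + (1 + 1 / (\<alpha> / 4)) * (opnorm (comm n z k) (comm n z l) E)\<^sup>2"
      for k l
    proof (rule sq_split)
      show "0 \<le> opnorm (comm n z k) (comm n z l) A" by (rule opnorm_nonneg)
      show "opnorm (comm n z k) (comm n z l) A \<le> opnorm (comm n z k) (comm n z l) P + opnorm (comm n z k) (comm n z l) E"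
        unfolding AE by (rule opnorm_add)
    qed (use opnorm_nonneg \<alpha> in auto)
    hence "SA \<le> (\<Sum>k<K. \<Sum>l<K. (1 + \<alpha> / 4) * (opnorm (comm n z k) (comm n z l) P)\<^sup>2
              + (1 + 1 / (\<alpha> / 4)) * (opnorm (comm n z k) (comm n z l) E)\<^sup>2)"
      unfolding SA_def by (intro sum_mono)
    also have "\<dots> = (1 + \<alpha> / 4) * S + (1 + 1 / (\<alpha> / 4)) * N"
      unfolding S_def N_def by (simp add: sum.distrib sum_distrib_left)
    finally show ?thesis .
  qed
  have opt: "FP + 2 * ip \<le> (1 + \<alpha> / 4) * S + (1 + 1 / (\<alpha> / 4)) * N + D" using opt1 SA_le by linarith
  have G2: "N \<le> 480 * (b + L + t)"
    unfolding N_def E_def b_def L_def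
    by (rule N_bound[OF z K1 t om sym]) (use notB2 z in blast)
  have S0: "S \<ge> 0" unfolding S_def by (auto intro!: sum_nonneg)
  have N0: "N \<ge> 0" unfolding N_def by (auto intro!: sum_nonneg)
  have bLb: "0 \<le> b" "b \<le> Lb"
    unfolding b_def Lb_def using breve_le[OF z, of P] by (auto intro!: xlog_ge_x simp flip: of_nat_mult)
  have js0: "0 \<le> js" unfolding js_def by simp
  have Lj0: "0 \<le> Lj" unfolding Lj_def js_def using js_bounds(2)[OF zs A1]
    by (intro xlog_nonneg) (simp flip: of_nat_mult)
  have L0: "0 \<le> L" unfolding L_def using K1 by simp
  have FP0: "FP \<ge> 0" unfolding FP_def by (rule frob2_nonneg)
  have hz: "FP \<ge> (1 + \<alpha>) * S + (3880 + 8 * \<beta>2) / \<alpha> * Lb + (3880 + 8 * \<beta>2) / \<alpha> * (js + L + t) + (2 * (\<beta>1 + \<beta>2)) * Lj"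
    using hyp z mz unfolding FP_def S_def Lb_def b_def js_def L_def Lj_def by (simp add: mult.assoc)
  have G1': "ip \<ge> - sqrt (FP * t)" using G1 unfolding ip_def FP_def A_def by simp
  show False
    by (rule final_arith[OF \<alpha> t S0 N0 bLb js0 Lj0 L0 b1 b2 FP0 hz refl refl G1' G2 opt])
       (simp add: D_def)
qed

lemma main_prob:
  fixes \<beta>1 \<beta>2 :: real
  assumes b1: "\<beta>1 > 0" and b2: "\<beta>2 > 0" and K2: "K \<ge> 2" and zs: "zs \<in> labelings n K"
    and L01: "\<forall>i<n. \<forall>l<K. 0 \<le> \<Lambda> i l \<and> \<Lambda> i l \<le> 1"
    and Pdef: "\<forall>i<n. \<forall>j<n. P i j = \<Lambda> i (zs j) * \<Lambda> j (zs i)"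
    and A1: "\<forall>k<K. \<forall>c::nat \<Rightarrow> real. (\<forall>i \<in> comm n zs k. (\<Sum>l<K. c l * \<Lambda> i l) = 0) \<longrightarrow> (\<forall>l<K. c l = 0)"
    and \<alpha>: "0 < \<alpha>" "\<alpha> < 1/2" and t: "t > 0"
    and est: "\<forall>\<omega>. is_estimate \<beta>1 \<beta>2 sp n K (adj n \<omega>) (Zhat (adj n \<omega>))"
    and hyp: "\<forall>z \<in> labelings n K. misclass n K z zs \<ge> \<delta> \<longrightarrow>
         frob2 {..<n} {..<n} P \<ge>
           (1 + \<alpha>) * (\<Sum>k<K. \<Sum>l<K. (opnorm (comm n z k) (comm n z l) P)\<^sup>2)
           + (3880 + 8 * \<beta>2) / \<alpha> * real (breve_card n K P z)
               * ln (real n * real K * exp 1 / real (breve_card n K P z))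
           + (3880 + 8 * \<beta>2) / \<alpha> * (real (Jstar_card n K zs \<Lambda>) + real n * ln (real K) + t)
           + (2 * (\<beta>1 + \<beta>2)) * real (Jstar_card n K zs \<Lambda>)
               * ln (real n * real K * exp 1 / real (Jstar_card n K zs \<Lambda>))"
  shows "measure_pmf.prob (edge_pmf n P) {\<omega>. misclass n K (Zhat (adj n \<omega>)) zs \<le> \<delta>} \<ge> 1 - 2 * exp (- t)"
proof -
  define M where "M = edge_pmf n P"
  have sym: "\<forall>i<n. \<forall>j<n. P i j = P j i" using Pdef by (simp add: mult.commute)
  have P01: "\<forall>i<n. \<forall>j<n. 0 \<le> P i j \<and> P i j \<le> 1"
  proof (intro allI impI)
    fix i j assume ij: "i < n" "j < n"
    have "zs i < K" "zs j < K" using lab_range[OF zs] ij by auto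
    hence "0 \<le> \<Lambda> i (zs j)" "\<Lambda> i (zs j) \<le> 1" "0 \<le> \<Lambda> j (zs i)" "\<Lambda> j (zs i) \<le> 1" using L01 ij by auto
    thus "0 \<le> P i j \<and> P i j \<le> 1" using Pdef ij by (simp add: mult_le_one)
  qed
  define B1 where "B1 = {\<omega>. (\<Sum>i<n. \<Sum>j<n. P i j * (adj n \<omega> i j - P i j)) < - sqrt (frob2 {..<n} {..<n} P * t)}"
  define B2 where "B2 = (\<Union>z\<in>labelings n K. \<Union>T\<in>blocks.nets (BlkK K) (RrZ n P z) (RcZ n P z).
       {\<omega>. sZ n K P t z \<le> FfZ n K z (Eom n P \<omega>) (fst T) (fst (snd T)) (snd (snd T))})"
  define B0 where "B0 = UNIV - set_pmf M"
  define T where "T = {\<omega>. misclass n K (Zhat (adj n \<omega>)) zs \<le> \<delta>}"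
  have pB1: "measure_pmf.prob M B1 \<le> exp (- t)" unfolding M_def B1_def by (rule G1_bound[OF sym P01 t])
  have pB2: "measure_pmf.prob M B2 \<le> exp (- t)" unfolding M_def B2_def using K2 by (intro G2_bound[OF _ t sym P01]) auto
  have pB0: "measure_pmf.prob M B0 = 0" unfolding B0_def by (simp add: measure_pmf_zero_iff)
  have sub: "UNIV - T \<subseteq> B0 \<union> B1 \<union> B2"
  proof
    fix \<omega> assume "\<omega> \<in> UNIV - T"
    hence nT: "\<not> misclass n K (Zhat (adj n \<omega>)) zs \<le> \<delta>" unfolding T_def by simp
    show "\<omega> \<in> B0 \<union> B1 \<union> B2"
    proof (rule ccontr)
      assume "\<omega> \<notin> B0 \<union> B1 \<union> B2"
      hence om: "\<omega> \<in> set_pmf (edge_pmf n P)" and nB1: "\<omega> \<notin> B1" and nB2: "\<omega> \<notin> B2"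
        unfolding B0_def M_def by auto
      have "misclass n K (Zhat (adj n \<omega>)) zs \<le> \<delta>"
      proof (rule det_core[OF b1 b2 K2 zs Pdef A1 \<alpha> t _ hyp om])
        show "is_estimate \<beta>1 \<beta>2 sp n K (adj n \<omega>) (Zhat (adj n \<omega>))" using est by blast
        show "\<not> (\<Sum>i<n. \<Sum>j<n. P i j * (adj n \<omega> i j - P i j)) < - sqrt (frob2 {..<n} {..<n} P * t)"
          using nB1 unfolding B1_def by simp
        show "\<forall>z\<in>labelings n K. \<forall>T\<in>blocks.nets (BlkK K) (RrZ n P z) (RcZ n P z).
                  \<not> sZ n K P t z \<le> FfZ n K z (Eom n P \<omega>) (fst T) (fst (snd T)) (snd (snd T))"
          using nB2 unfolding B2_def by blast
      qed
      thus False using nT by simp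
    qed
  qed
  have "measure_pmf.prob M (UNIV - T) \<le> measure_pmf.prob M (B0 \<union> B1 \<union> B2)"
    by (rule measure_pmf.finite_measure_mono[OF sub]) simp
  also have "\<dots> \<le> measure_pmf.prob M (B0 \<union> B1) + measure_pmf.prob M B2" by (rule measure_Un_le) auto
  also have "measure_pmf.prob M (B0 \<union> B1) \<le> measure_pmf.prob M B0 + measure_pmf.prob M B1" by (rule measure_Un_le) auto
  finally have "measure_pmf.prob M (UNIV - T) \<le> 2 * exp (- t)" using pB0 pB1 pB2 by linarith
  moreover have "measure_pmf.prob M (UNIV - T) = 1 - measure_pmf.prob M T"
    using measure_pmf.prob_compl[of T M] by simp
  ultimately show ?thesis unfolding T_def M_def by linarith
qed

theorem theorem2:
  fixes \<beta>1 \<beta>2 :: real and sp :: bool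
  assumes "\<beta>1 > 0" and "\<beta>2 > 0"
  shows "\<exists>H1>0. \<exists>H2>0. \<forall>(n::nat) (K::nat) (zs::nat \<Rightarrow> nat) (\<Lambda>::nat \<Rightarrow> nat \<Rightarrow> real)
      (P::nat \<Rightarrow> nat \<Rightarrow> real) (\<alpha>::real) (\<delta>::real) (t::real)
      (Zhat::(nat \<Rightarrow> nat \<Rightarrow> real) \<Rightarrow> nat \<Rightarrow> nat).
    K \<ge> 2 \<and> zs \<in> labelings n K
    \<and> (\<forall>i<n. \<forall>l<K. 0 \<le> \<Lambda> i l \<and> \<Lambda> i l \<le> 1)
    \<and> (\<forall>i<n. \<forall>j<n. P i j = \<Lambda> i (zs j) * \<Lambda> j (zs i))
    \<and> (\<forall>k<K. \<forall>c::nat \<Rightarrow> real. (\<forall>i \<in> comm n zs k. (\<Sum>l<K. c l * \<Lambda> i l) = 0) \<longrightarrow> (\<forall>l<K. c l = 0))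
    \<and> 0 < \<alpha> \<and> \<alpha> < 1/2 \<and> 0 < \<delta> \<and> \<delta> < 1 \<and> t > 0
    \<and> (\<forall>\<omega>. is_estimate \<beta>1 \<beta>2 sp n K (adj n \<omega>) (Zhat (adj n \<omega>)))
    \<and> (\<forall>z \<in> labelings n K. misclass n K z zs \<ge> \<delta> \<longrightarrow>
         frob2 {..<n} {..<n} P \<ge>
           (1 + \<alpha>) * (\<Sum>k<K. \<Sum>l<K. (opnorm (comm n z k) (comm n z l) P)\<^sup>2)
           + H1 / \<alpha> * real (breve_card n K P z)
               * ln (real n * real K * exp 1 / real (breve_card n K P z))
           + H1 / \<alpha> * (real (Jstar_card n K zs \<Lambda>) + real n * ln (real K) + t)
           + H2 * real (Jstar_card n K zs \<Lambda>)
               * ln (real n * real K * exp 1 / real (Jstar_card n K zs \<Lambda>)))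
    \<longrightarrow> measure_pmf.prob (edge_pmf n P) {\<omega>. misclass n K (Zhat (adj n \<omega>)) zs \<le> \<delta>}
          \<ge> 1 - 2 * exp (- t)"
proof (rule exI[of _ "3880 + 8 * \<beta>2"], rule conjI[OF _ exI[of _ "2 * (\<beta>1 + \<beta>2)"]], rule_tac [2] conjI)
  show "(0::real) < 3880 + 8 * \<beta>2" using assms by simp
  show "(0::real) < 2 * (\<beta>1 + \<beta>2)" using assms by simp
next
  show "\<forall>(n::nat) (K::nat) (zs::nat \<Rightarrow> nat) (\<Lambda>::nat \<Rightarrow> nat \<Rightarrow> real)
      (P::nat \<Rightarrow> nat \<Rightarrow> real) (\<alpha>::real) (\<delta>::real) (t::real)
      (Zhat::(nat \<Rightarrow> nat \<Rightarrow> real) \<Rightarrow> nat \<Rightarrow> nat).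
    K \<ge> 2 \<and> zs \<in> labelings n K
    \<and> (\<forall>i<n. \<forall>l<K. 0 \<le> \<Lambda> i l \<and> \<Lambda> i l \<le> 1)
    \<and> (\<forall>i<n. \<forall>j<n. P i j = \<Lambda> i (zs j) * \<Lambda> j (zs i))
    \<and> (\<forall>k<K. \<forall>c::nat \<Rightarrow> real. (\<forall>i \<in> comm n zs k. (\<Sum>l<K. c l * \<Lambda> i l) = 0) \<longrightarrow> (\<forall>l<K. c l = 0))
    \<and> 0 < \<alpha> \<and> \<alpha> < 1/2 \<and> 0 < \<delta> \<and> \<delta> < 1 \<and> t > 0
    \<and> (\<forall>\<omega>. is_estimate \<beta>1 \<beta>2 sp n K (adj n \<omega>) (Zhat (adj n \<omega>)))
    \<and> (\<forall>z \<in> labelings n K. misclass n K z zs \<ge> \<delta> \<longrightarrow>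
         frob2 {..<n} {..<n} P \<ge>
           (1 + \<alpha>) * (\<Sum>k<K. \<Sum>l<K. (opnorm (comm n z k) (comm n z l) P)\<^sup>2)
           + (3880 + 8 * \<beta>2) / \<alpha> * real (breve_card n K P z)
               * ln (real n * real K * exp 1 / real (breve_card n K P z))
           + (3880 + 8 * \<beta>2) / \<alpha> * (real (Jstar_card n K zs \<Lambda>) + real n * ln (real K) + t)
           + (2 * (\<beta>1 + \<beta>2)) * real (Jstar_card n K zs \<Lambda>)
               * ln (real n * real K * exp 1 / real (Jstar_card n K zs \<Lambda>)))
    \<longrightarrow> measure_pmf.prob (edge_pmf n P) {\<omega>. misclass n K (Zhat (adj n \<omega>)) zs \<le> \<delta>}
          \<ge> 1 - 2 * exp (- t)"
  proof (intro allI impI)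
  fix n K zs \<Lambda> P \<alpha> \<delta> t Zhat
  assume h: "K \<ge> 2 \<and> zs \<in> labelings n K
    \<and> (\<forall>i<n. \<forall>l<K. 0 \<le> \<Lambda> i l \<and> \<Lambda> i l \<le> 1)
    \<and> (\<forall>i<n. \<forall>j<n. P i j = \<Lambda> i (zs j) * \<Lambda> j (zs i))
    \<and> (\<forall>k<K. \<forall>c::nat \<Rightarrow> real. (\<forall>i \<in> comm n zs k. (\<Sum>l<K. c l * \<Lambda> i l) = 0) \<longrightarrow> (\<forall>l<K. c l = 0))
    \<and> 0 < \<alpha> \<and> \<alpha> < 1/2 \<and> 0 < \<delta> \<and> \<delta> < 1 \<and> t > 0
    \<and> (\<forall>\<omega>. is_estimate \<beta>1 \<beta>2 sp n K (adj n \<omega>) (Zhat (adj n \<omega>)))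
    \<and> (\<forall>z \<in> labelings n K. misclass n K z zs \<ge> \<delta> \<longrightarrow>
         frob2 {..<n} {..<n} P \<ge>
           (1 + \<alpha>) * (\<Sum>k<K. \<Sum>l<K. (opnorm (comm n z k) (comm n z l) P)\<^sup>2)
           + (3880 + 8 * \<beta>2) / \<alpha> * real (breve_card n K P z)
               * ln (real n * real K * exp 1 / real (breve_card n K P z))
           + (3880 + 8 * \<beta>2) / \<alpha> * (real (Jstar_card n K zs \<Lambda>) + real n * ln (real K) + t)
           + (2 * (\<beta>1 + \<beta>2)) * real (Jstar_card n K zs \<Lambda>)
               * ln (real n * real K * exp 1 / real (Jstar_card n K zs \<Lambda>)))"
  show "measure_pmf.prob (edge_pmf n P) {\<omega>. misclass n K (Zhat (adj n \<omega>)) zs \<le> \<delta>} \<ge> 1 - 2 * exp (- t)"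
  proof -
    have h1: "K \<ge> 2" and h2: "zs \<in> labelings n K" and h3: "\<forall>i<n. \<forall>l<K. 0 \<le> \<Lambda> i l \<and> \<Lambda> i l \<le> 1"
      and h4: "\<forall>i<n. \<forall>j<n. P i j = \<Lambda> i (zs j) * \<Lambda> j (zs i)"
      and h5: "\<forall>k<K. \<forall>c::nat \<Rightarrow> real. (\<forall>i \<in> comm n zs k. (\<Sum>l<K. c l * \<Lambda> i l) = 0) \<longrightarrow> (\<forall>l<K. c l = 0)"
      and h6: "0 < \<alpha>" and h7: "\<alpha> < 1/2" and h8: "t > 0"
      and h9: "\<forall>\<omega>. is_estimate \<beta>1 \<beta>2 sp n K (adj n \<omega>) (Zhat (adj n \<omega>))"
      using h by blast+
    have h10: "\<forall>z \<in> labelings n K. misclass n K z zs \<ge> \<delta> \<longrightarrow>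
         frob2 {..<n} {..<n} P \<ge>
           (1 + \<alpha>) * (\<Sum>k<K. \<Sum>l<K. (opnorm (comm n z k) (comm n z l) P)\<^sup>2)
           + (3880 + 8 * \<beta>2) / \<alpha> * real (breve_card n K P z)
               * ln (real n * real K * exp 1 / real (breve_card n K P z))
           + (3880 + 8 * \<beta>2) / \<alpha> * (real (Jstar_card n K zs \<Lambda>) + real n * ln (real K) + t)
           + (2 * (\<beta>1 + \<beta>2)) * real (Jstar_card n K zs \<Lambda>)
               * ln (real n * real K * exp 1 / real (Jstar_card n K zs \<Lambda>))"
      using h by blast
    show ?thesis by (rule main_prob[OF assms h1 h2 h3 h4 h5 h6 h7 h8 h9 h10])
  qed
  qed
qed

end
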